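(* Let $X=\bigcap_{i=1}^mX_i\subseteq\mathbb{R}^n$ with each $X_i$ closed convex and $X$ nonempty, with some $D_X>0$ such that $\|u-v\|^2\le D_X^2$ for all $u,v\in X$. Let $F(x)=\mathbb{E}[F(x,\omega)]$ and assume: (A1) $F$ is $L$-Lipschitz continuous and monotone on $\mathbb{R}^n$; (A2) the solution set $X^*$ of VI$(X,F)$ is nonempty and compact and $\|F(x^* )\|\le C$ for all $x^*\in X^*$; (A4) the noise condition in the context holds with $\nu_1,\nu_2\ge0$; (A5) there is $\eta>0$ with $\|x-\Pi_X(x)\|^2\le\eta\max_i\|x-\Pi_{X_i}(x)\|^2$ for all $x$; (A6) $\inf_{k\ge0}P(l_k=i\mid\mathcal{F}_k)\ge\rho_i/m$ a.s. for each $i$, with $\rho_i\in(0,1]$; let $\rho=\min_i\rho_i$. Let $\{x_k\}$ be generated by (r-SSE): $x_{k+\frac12}=\Pi_{l_k}(x_k-\gamma_kF(x_k,\omega_k))$, $x_{k+1}=\Pi_{C_k}(x_k-\gamma_kF(x_{k+\frac12},\omega_{k+\frac12}))$, $C_k=\{y:(x_k-\gamma_kF(x_k,\omega_k)-x_{k+\frac12})^T(y-x_{k+\frac12})\le0\}$. Let $\beta\triangleq1-\frac{\rho^2}{64m^2\eta^2}$. Then: (a) if $\sum_k\gamma_k=\infty$ and $\sum_k\gamma_k^2<\infty$, then $\mathrm{dist}(x_k,X)\to0$ almost surely; (b) if $\gamma_k=1/k^{t/2}$ with $t\ge1$, then $\mathbb{E}[\mathrm{dist}(x_k,X)]\le\mathcal{O}(1/k^{t/2})$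 for any $k\ge\bar k$, where $\bar k\triangleq\left\lceil\frac{1}{1-(1-\beta/2)^{1/t}}-1\right\rceil$; (c) if $\gamma_k=1/k^{1/2}$ and $\bar x_{K,\bar k}\triangleq\frac{\sum_{k=\bar k+\lfloor K/2\rfloor}^{\bar k+K}\gamma_kx_k}{\sum_{k=\bar k+\lfloor K/2\rfloor}^{K+\bar k}\gamma_k}$ (with $\bar k$ as in (b) for $t=1$), then $\mathbb{E}[\mathrm{dist}(\bar x_{K,\bar k},X)]\le\mathcal{O}(1/\sqrt K)$.
   Context: VI$(X,F)$: find $x^*\in X$ with $F(x^* )^T(x-x^* )\ge0$ for all $x\in X$. $\Pi_S$ is Euclidean projection onto $S$; $\Pi_{l_k}$ onto the random set $X_{l_k}$; $\mathrm{dist}(x,X)=\min_{y\in X}\|x-y\|$. Noise condition (A4): with $\mathcal{F}_k$ the history up to iteration $k$ and $\mathcal{F}_{k+\frac12}=\mathcal{F}_k\cup\{F(x_k,\omega_k)\}$, the errors $w_k=F(x_k,\omega_k)-F(x_k)$, $w_{k+\frac12}=F(x_{k+\frac12},\omega_{k+\frac12})-F(x_{k+\frac12})$ have zero conditional mean given $\mathcal{F}_k$, resp. $\mathcal{F}_{k+\frac12}$, and conditional second moments at most $\nu_1^2\|x_k\|^2+\nu_2^2$, resp. $\nu_1^2\|x_{k+\frac12}\|^2+\nu_2^2$, a.s. *)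

theory Defs
  imports "HOL-Analysis.Analysis" "HOL-Probability.Probability"
begin

definition VI_sol :: "'a::real_inner set \<Rightarrow> ('a \<Rightarrow> 'a) \<Rightarrow> 'a set" where
  "VI_sol X F = {xs \<in> X. \<forall>y\<in>X. F xs \<bullet> (y - xs) \<ge> 0}"

definition rv_events :: "'w measure \<Rightarrow> ('w \<Rightarrow> 'b) \<Rightarrow> 'b measure \<Rightarrow> 'w set set" where
  "rv_events M f N = {f -` B \<inter> space M | B. B \<in> sets N}"

text \<open>History sigma-algebra F_k: generated by the sampled operator values
  G_j = F(x_j,omega_j), H_j = F(x_{j+1/2},omega_{j+1/2}) and the random indices l_j, j < k
  (the initial point is deterministic).\<close>
definition hist_F :: "'w measure \<Rightarrow> (nat \<Rightarrow> 'w \<Rightarrow> 'a::euclidean_space) \<Rightarrow> (nat \<Rightarrow> 'w \<Rightarrow> 'a)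
    \<Rightarrow> (nat \<Rightarrow> 'w \<Rightarrow> nat) \<Rightarrow> nat \<Rightarrow> 'w measure" where
  "hist_F M G H l k = sigma (space M)
     (\<Union>j<k. rv_events M (G j) borel \<union> rv_events M (H j) borel \<union> rv_events M (l j) (count_space UNIV))"

definition hist_Fh :: "'w measure \<Rightarrow> (nat \<Rightarrow> 'w \<Rightarrow> 'a::euclidean_space) \<Rightarrow> (nat \<Rightarrow> 'w \<Rightarrow> 'a)
    \<Rightarrow> (nat \<Rightarrow> 'w \<Rightarrow> nat) \<Rightarrow> nat \<Rightarrow> 'w measure" where
  "hist_Fh M G H l k = sigma (space M)
     ((\<Union>j<k. rv_events M (G j) borel \<union> rv_events M (H j) borel \<union> rv_events M (l j) (count_space UNIV))
      \<union> rv_events M (G k) borel \<union> rv_events M (l k) (count_space UNIV))"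

definition cond_mean_zero :: "'w measure \<Rightarrow> 'w measure \<Rightarrow> ('w \<Rightarrow> 'a::euclidean_space) \<Rightarrow> bool" where
  "cond_mean_zero M N w \<longleftrightarrow> integrable M w \<and>
     (\<forall>b\<in>Basis. AE \<omega> in M. real_cond_exp M N (\<lambda>\<omega>. w \<omega> \<bullet> b) \<omega> = 0)"

definition cond_second_moment_le :: "'w measure \<Rightarrow> 'w measure \<Rightarrow> ('w \<Rightarrow> 'a::euclidean_space)
    \<Rightarrow> ('w \<Rightarrow> 'a) \<Rightarrow> real \<Rightarrow> real \<Rightarrow> bool" where
  "cond_second_moment_le M N w z \<nu>1 \<nu>2 \<longleftrightarrow>
     (AE \<omega> in M. nn_cond_exp M N (\<lambda>\<omega>. ennreal ((norm (w \<omega>))\<^sup>2)) \<omega>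
                   \<le> ennreal (\<nu>1\<^sup>2 * (norm (z \<omega>))\<^sup>2 + \<nu>2\<^sup>2))"

definition kbar :: "real \<Rightarrow> real \<Rightarrow> nat" where
  "kbar \<beta> t = nat \<lceil>1 / (1 - (1 - \<beta> / 2) powr (1 / t)) - 1\<rceil>"

end

theory Submission
  imports Defs
begin

lemma norm_add_sq:
  fixes u v :: "'a::real_inner"
  shows "(norm (u + v))\<^sup>2 = (norm u)\<^sup>2 + (norm v)\<^sup>2 + 2 * (u \<bullet> v)"
  by (simp add: power2_norm_eq_inner inner_add_left inner_add_right inner_commute)

lemma hsp_formula:
  fixes a b z :: "'a::euclidean_space"
  shows "closest_point {y. a \<bullet> (y - b) \<le> 0} z =
    (if a = 0 then z else z - (max 0 (a \<bullet> (z - b)) / (a \<bullet> a)) *\<^sub>R a)"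
proof (cases "a = 0")
  case True
  then show ?thesis by (simp add: closest_point_self)
next
  case False
  define S where "S = {y. a \<bullet> (y - b) \<le> 0}"
  have S_eq: "S = {y. a \<bullet> y \<le> a \<bullet> b}" unfolding S_def by (auto simp: inner_diff_right)
  have cS: "convex S" "closed S" unfolding S_eq by (auto intro: convex_halfspace_le closed_halfspace_le)
  define t where "t = max 0 (a \<bullet> (z - b)) / (a \<bullet> a)"
  define p where "p = z - t *\<^sub>R a"
  have aa: "a \<bullet> a > 0" using False by simp
  have tn: "t \<ge> 0" unfolding t_def using aa by simp
  have pS: "p \<in> S"
  proof (cases "a \<bullet> (z - b) \<le> 0")
    case True then show ?thesis unfolding S_def p_def t_def by simp
  next
    case False
    then have "t * (a \<bullet> a) = a \<bullet> (z - b)" unfolding t_def using aa by simp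
    then show ?thesis unfolding S_def p_def by (simp add: inner_diff_right inner_diff_left algebra_simps)
  qed
  have tz: "t * (a \<bullet> (p - b)) = 0"
  proof (cases "a \<bullet> (z - b) \<le> 0")
    case True then show ?thesis unfolding t_def by simp
  next
    case False
    then have "t * (a \<bullet> a) = a \<bullet> (z - b)" unfolding t_def using aa by simp
    then show ?thesis unfolding p_def by (simp add: inner_diff_right inner_diff_left algebra_simps)
  qed
  have "\<forall>w\<in>S. dist z p \<le> dist z w"
  proof
    fix w assume "w \<in> S"
    then have wS: "a \<bullet> (w - b) \<le> 0" unfolding S_def by simp
    have "(z - p) \<bullet> (p - w) = t * (a \<bullet> (p - b)) - t * (a \<bullet> (w - b))"
      unfolding p_def by (simp add: inner_diff_right inner_diff_left algebra_simps)
    also have "\<dots> \<ge> 0" using tz mult_nonneg_nonpos[OF tn wS] by linarith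
    finally have ip: "(z - p) \<bullet> (p - w) \<ge> 0" .
    have "(norm (z - w))\<^sup>2 = (norm (z - p))\<^sup>2 + (norm (p - w))\<^sup>2 + 2 * ((z - p) \<bullet> (p - w))"
      using norm_add_sq[of "z - p" "p - w"] by simp
    then have "(norm (z - p))\<^sup>2 \<le> (norm (z - w))\<^sup>2" using ip by simp
    then show "dist z p \<le> dist z w" by (simp add: dist_norm power2_le_iff_abs_le)
  qed
  then have "p = closest_point S z" using closest_point_unique[OF cS pS] by blast
  then show ?thesis using False unfolding S_def p_def t_def by simp
qed

lemma rv_events_sub: "f \<in> measurable M N \<Longrightarrow> rv_events M f N \<subseteq> sets M"
  unfolding rv_events_def by (auto intro: measurable_sets)

lemma rv_events_pow: "rv_events M f N \<subseteq> Pow (space M)"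
  unfolding rv_events_def by auto

lemma sigma_subalg: assumes "A \<subseteq> sets M" shows "subalgebra M (sigma (space M) A)"
proof -
  have P: "A \<subseteq> Pow (space M)" using assms sets.sets_into_space by blast
  show ?thesis unfolding subalgebra_def
    using P assms by (simp add: sets.sigma_sets_subset)
qed

lemma rv_meas_sigma:
  assumes "rv_events M f N \<subseteq> A" "A \<subseteq> Pow (space M)" "space N = UNIV"
  shows "f \<in> measurable (sigma (space M) A) N"
  unfolding measurable_def
proof (safe)
  fix x assume "x \<in> space (sigma (space M) A)" then show "f x \<in> space N" using assms by simp
next
  fix B assume "B \<in> sets N"
  then have "f -` B \<inter> space M \<in> A" using assms(1) unfolding rv_events_def by blast
  then show "f -` B \<inter> space (sigma (space M) A) \<in> sets (sigma (space M) A)"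
    using assms(2) by (simp add: sigma_sets.Basic)
qed

lemma hsp_meas:
  fixes a b z :: "'w \<Rightarrow> 'a::euclidean_space"
  assumes [measurable]: "a \<in> borel_measurable N" "b \<in> borel_measurable N" "z \<in> borel_measurable N"
  shows "(\<lambda>\<omega>. closest_point {y. a \<omega> \<bullet> (y - b \<omega>) \<le> 0} (z \<omega>)) \<in> borel_measurable N"
  unfolding hsp_formula by measurable

lemma closest_meas:
  fixes v :: "'w \<Rightarrow> 'a::euclidean_space" and li :: "'w \<Rightarrow> nat"
  assumes v: "v \<in> borel_measurable N" and li: "li \<in> measurable N (count_space UNIV)"
    and rng: "\<forall>\<omega>\<in>space N. li \<omega> < m"
    and S: "\<forall>i<m. closed (S i) \<and> convex (S i) \<and> S i \<noteq> {}"
  shows "(\<lambda>\<omega>. closest_point (S (li \<omega>)) (v \<omega>)) \<in> borel_measurable N"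
proof -
  define f where "f = (\<lambda>(i::nat) \<omega>. if i < m then closest_point (S i) (v \<omega>) else 0)"
  have "(\<lambda>\<omega>. f (li \<omega>) \<omega>) \<in> borel_measurable N"
  proof (rule measurable_compose_countable[OF _ li])
    fix i :: nat
    show "f i \<in> borel_measurable N"
    proof (cases "i < m")
      case True
      have "continuous_on UNIV (closest_point (S i))"
        using S True by (intro continuous_on_closest_point) auto
      then have "closest_point (S i) \<in> borel_measurable borel"
        by (rule borel_measurable_continuous_onI)
      then show ?thesis using True unfolding f_def by (simp add: measurable_compose[OF v])
    next
      case False then show ?thesis unfolding f_def by simp
    qed
  qed
  moreover have "\<forall>\<omega>\<in>space N. f (li \<omega>) \<omega> = closest_point (S (li \<omega>)) (v \<omega>)"
    using rng unfolding f_def by auto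
  ultimately show ?thesis using measurable_cong by (smt (verit, best))
qed

lemma proj_pyth:
  fixes S :: "'a::euclidean_space set"
  assumes "convex S" "closed S" "y \<in> S"
  shows "(norm (closest_point S v - y))\<^sup>2 \<le> (norm (v - y))\<^sup>2 - (norm (v - closest_point S v))\<^sup>2"
proof -
  have d: "(v - closest_point S v) \<bullet> (y - closest_point S v) \<le> 0"
    using closest_point_dot[OF assms] .
  have "(norm (v - y))\<^sup>2 = (norm (v - closest_point S v))\<^sup>2 + (norm (closest_point S v - y))\<^sup>2
          + 2 * ((v - closest_point S v) \<bullet> (closest_point S v - y))"
    using norm_add_sq[of "v - closest_point S v" "closest_point S v - y"] by simp
  moreover have "(v - closest_point S v) \<bullet> (closest_point S v - y) = - ((v - closest_point S v) \<bullet> (y - closest_point S v))"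
    by (simp add: inner_diff_right)
  ultimately show ?thesis using d by linarith
qed

lemma proj_nonexp:
  fixes S :: "'a::euclidean_space set"
  assumes "convex S" "closed S" "S \<noteq> {}"
  shows "norm (closest_point S u - closest_point S v) \<le> norm (u - v)"
  using closest_point_lipschitz[OF assms, of u v] by (simp add: dist_norm)

lemma hsp_self:
  fixes z xh :: "'a::euclidean_space"
  shows "closest_point {y. (z - xh) \<bullet> (y - xh) \<le> 0} z = xh"
proof (cases "z - xh = 0")
  case True then show ?thesis by (simp add: hsp_formula closest_point_self)
next
  case False
  then have "(z - xh) \<bullet> (z - xh) > 0" by simp
  then show ?thesis using False by (simp add: hsp_formula)
qed

lemma infdist_cp:
  fixes X :: "'a::euclidean_space set"
  assumes "closed X" "X \<noteq> {}"
  shows "infdist v X = norm (v - closest_point X v)"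
  using setdist_closest_point[OF assms, of v] by (simp add: infdist_eq_setdist dist_norm)

lemma sq_split:
  fixes s t \<epsilon> :: real
  assumes "\<epsilon> > 0"
  shows "(s + t)\<^sup>2 \<le> (1 + \<epsilon>) * t\<^sup>2 + (1 + 1/\<epsilon>) * s\<^sup>2"
proof -
  have "0 \<le> (\<epsilon> * t - s)\<^sup>2 / \<epsilon>" using assms by simp
  also have "(\<epsilon> * t - s)\<^sup>2 / \<epsilon> = \<epsilon> * t\<^sup>2 - 2 * s * t + s\<^sup>2 / \<epsilon>"
    using assms by (simp add: power2_eq_square field_simps)
  finally have "2 * s * t \<le> \<epsilon> * t\<^sup>2 + s\<^sup>2 / \<epsilon>" by simp
  then show ?thesis by (simp add: power2_eq_square algebra_simps)
qed

lemma geo_step: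
  fixes S X :: "'a::euclidean_space set" and x g h :: 'a
  assumes S: "convex S" "closed S" and XS: "X \<subseteq> S"
    and X: "convex X" "closed X" "X \<noteq> {}"
    and eps: "\<epsilon> > 0" and gam: "\<gamma> \<ge> 0"
  shows "(infdist (closest_point {y. (x - \<gamma> *\<^sub>R g - closest_point S (x - \<gamma> *\<^sub>R g)) \<bullet> (y - closest_point S (x - \<gamma> *\<^sub>R g)) \<le> 0} (x - \<gamma> *\<^sub>R h)) X)\<^sup>2
          + (1 + \<epsilon>) * (norm (x - closest_point S x))\<^sup>2
       \<le> (1 + \<epsilon>) * (infdist x X)\<^sup>2 + (1 + 1/\<epsilon>) * (\<gamma>\<^sup>2 * (8 * (norm g)\<^sup>2 + 2 * (norm h)\<^sup>2))"
proof -
  define z where "z = x - \<gamma> *\<^sub>R g"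
  define xh where "xh = closest_point S z"
  define C where "C = {y. (z - xh) \<bullet> (y - xh) \<le> 0}"
  define x' where "x' = closest_point C (x - \<gamma> *\<^sub>R h)"
  have Sne: "S \<noteq> {}" using XS X by blast
  have C_eq: "C = {y. (z - xh) \<bullet> y \<le> (z - xh) \<bullet> xh}" unfolding C_def by (auto simp: inner_diff_right)
  have cC: "convex C" "closed C" unfolding C_eq by (auto intro: convex_halfspace_le closed_halfspace_le)
  have xhC: "xh \<in> C" unfolding C_def by simp
  have "closest_point C z = xh" unfolding C_def by (rule hsp_self)
  then have n1: "norm (x' - xh) \<le> \<gamma> * (norm g + norm h)"
  proof -
    assume e: "closest_point C z = xh"
    have "norm (x' - xh) \<le> norm ((x - \<gamma> *\<^sub>R h) - z)"
      unfolding x'_def using proj_nonexp[OF cC, of "x - \<gamma> *\<^sub>R h" z] xhC e by auto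
    also have "(x - \<gamma> *\<^sub>R h) - z = \<gamma> *\<^sub>R (g - h)" unfolding z_def by (simp add: algebra_simps)
    also have "norm (\<gamma> *\<^sub>R (g - h)) \<le> \<gamma> * (norm g + norm h)"
      using gam by (simp add: mult_left_mono norm_triangle_ineq4)
    finally show ?thesis .
  qed
  define u where "u = closest_point S x"
  have n2: "norm (xh - u) \<le> \<gamma> * norm g"
  proof -
    have "norm (xh - u) \<le> norm (z - x)" unfolding xh_def u_def by (rule proj_nonexp[OF S Sne])
    also have "z - x = - (\<gamma> *\<^sub>R g)" unfolding z_def by simp
    finally show ?thesis using gam by simp
  qed
  define c where "c = closest_point X x"
  have cX: "c \<in> X" unfolding c_def using closest_point_in_set X by blast
  have dx: "infdist x X = norm (x - c)" unfolding c_def by (rule infdist_cp[OF X(2,3)])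
  have n3: "(norm (u - c))\<^sup>2 \<le> (norm (x - c))\<^sup>2 - (norm (x - u))\<^sup>2"
    unfolding u_def using proj_pyth[OF S, of c x] cX XS by auto
  define s where "s = \<gamma> * (2 * norm g + norm h)"
  define t where "t = norm (u - c)"
  have "infdist x' X \<le> norm (x' - c)" using infdist_le[OF cX, of x'] by (simp add: dist_norm)
  also have "norm (x' - c) \<le> norm (x' - xh) + norm (xh - u) + norm (u - c)"
  proof -
    have "x' - c = (x' - xh) + (xh - u) + (u - c)" by simp
    then have "norm (x' - c) \<le> norm ((x' - xh) + (xh - u)) + norm (u - c)"
      by (metis norm_triangle_ineq)
    also have "norm ((x' - xh) + (xh - u)) \<le> norm (x' - xh) + norm (xh - u)" by (rule norm_triangle_ineq)
    finally show ?thesis by simp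
  qed
  also have "\<dots> \<le> s + t" using n1 n2 unfolding s_def t_def by (simp add: algebra_simps)
  finally have "infdist x' X \<le> s + t" .
  then have "(infdist x' X)\<^sup>2 \<le> (s + t)\<^sup>2" using infdist_nonneg[of x' X] by (rule power_mono)
  also have "\<dots> \<le> (1 + \<epsilon>) * t\<^sup>2 + (1 + 1/\<epsilon>) * s\<^sup>2" by (rule sq_split[OF eps])
  also have "s\<^sup>2 \<le> \<gamma>\<^sup>2 * (8 * (norm g)\<^sup>2 + 2 * (norm h)\<^sup>2)"
  proof -
    have "(2 * norm g + norm h)\<^sup>2 \<le> 8 * (norm g)\<^sup>2 + 2 * (norm h)\<^sup>2"
      using sq_split[of 1 "2 * norm g" "norm h"] by (simp add: power2_eq_square algebra_simps)
    then show ?thesis unfolding s_def by (simp add: power_mult_distrib mult_left_mono)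
  qed
  then have "(1 + 1/\<epsilon>) * s\<^sup>2 \<le> (1 + 1/\<epsilon>) * (\<gamma>\<^sup>2 * (8 * (norm g)\<^sup>2 + 2 * (norm h)\<^sup>2))"
    using eps by (intro mult_left_mono) auto
  finally have "(infdist x' X)\<^sup>2 \<le> (1 + \<epsilon>) * t\<^sup>2 + (1 + 1/\<epsilon>) * (\<gamma>\<^sup>2 * (8 * (norm g)\<^sup>2 + 2 * (norm h)\<^sup>2))"
    by simp
  moreover have "(1 + \<epsilon>) * t\<^sup>2 \<le> (1 + \<epsilon>) * ((infdist x X)\<^sup>2 - (norm (x - u))\<^sup>2)"
    using n3 eps unfolding t_def dx by (intro mult_left_mono) auto
  ultimately show ?thesis unfolding x'_def C_def xh_def z_def u_def[symmetric]
    by (simp add: algebra_simps)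
qed

locale rsse =
  fixes M :: "'w measure"
    and m :: nat and Xs :: "nat \<Rightarrow> 'a::euclidean_space set" and X :: "'a set"
    and D L \<nu>1 \<nu>2 \<eta> :: real and \<rho> :: "nat \<Rightarrow> real"
    and F :: "'a \<Rightarrow> 'a"
    and x xh G H :: "nat \<Rightarrow> 'w \<Rightarrow> 'a" and l :: "nat \<Rightarrow> 'w \<Rightarrow> nat"
    and \<gamma> :: "nat \<Rightarrow> real" and x0 :: 'a
  assumes prob: "prob_space M"
    and m_pos: "m \<ge> 1"
    and X_def: "X = (\<Inter>i<m. Xs i)"
    and Xs_closed: "\<forall>i<m. closed (Xs i)" and Xs_convex: "\<forall>i<m. convex (Xs i)"
    and X_ne: "X \<noteq> {}"
    and D_pos: "D > 0" and diam: "\<forall>u\<in>X. \<forall>v\<in>X. (norm (u - v))\<^sup>2 \<le> D\<^sup>2"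
    and Lip: "\<forall>u v. norm (F u - F v) \<le> L * norm (u - v)"
    and G_meas: "\<forall>k. G k \<in> borel_measurable M" and H_meas: "\<forall>k. H k \<in> borel_measurable M"
    and l_meas: "\<forall>k. l k \<in> measurable M (count_space UNIV)"
    and l_range: "\<forall>k. \<forall>\<omega>\<in>space M. l k \<omega> < m"
    and \<nu>_nonneg: "\<nu>1 \<ge> 0" "\<nu>2 \<ge> 0"
    and noise1m: "\<forall>k. cond_second_moment_le M (hist_F M G H l k) (\<lambda>\<omega>. G k \<omega> - F (x k \<omega>)) (x k) \<nu>1 \<nu>2"
    and noise2m: "\<forall>k. cond_second_moment_le M (hist_Fh M G H l k) (\<lambda>\<omega>. H k \<omega> - F (xh k \<omega>)) (xh k) \<nu>1 \<nu>2"
    and \<eta>_pos: "\<eta> > 0"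
    and linreg: "\<forall>z. (norm (z - closest_point X z))\<^sup>2
                    \<le> \<eta> * Max ((\<lambda>i. (norm (z - closest_point (Xs i) z))\<^sup>2) ` {..<m})"
    and \<rho>_range: "\<forall>i<m. 0 < \<rho> i \<and> \<rho> i \<le> 1"
    and sampling: "\<forall>i<m. \<forall>k. AE \<omega> in M.
                     real_cond_exp M (hist_F M G H l k) (indicator {\<omega>\<in>space M. l k \<omega> = i}) \<omega> \<ge> \<rho> i / m"
    and \<gamma>_pos: "\<forall>k. \<gamma> k > 0"
    and x_init: "\<forall>\<omega>\<in>space M. x 0 \<omega> = x0"
    and step_half: "\<forall>k. \<forall>\<omega>\<in>space M.
                      xh k \<omega> = closest_point (Xs (l k \<omega>)) (x k \<omega> - \<gamma> k *\<^sub>R G k \<omega>)"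
    and step_full: "\<forall>k. \<forall>\<omega>\<in>space M.
                      x (Suc k) \<omega> = closest_point
                        {y. (x k \<omega> - \<gamma> k *\<^sub>R G k \<omega> - xh k \<omega>) \<bullet> (y - xh k \<omega>) \<le> 0}
                        (x k \<omega> - \<gamma> k *\<^sub>R H k \<omega>)"
begin

sublocale P: prob_space M by (rule prob)

lemma X_closed: "closed X" unfolding X_def using Xs_closed by auto
lemma X_convex: "convex X" unfolding X_def using Xs_convex by (auto intro: convex_INT)
lemma X_sub: "i < m \<Longrightarrow> X \<subseteq> Xs i" unfolding X_def by auto
lemma Xs_ne: "i < m \<Longrightarrow> Xs i \<noteq> {}" using X_sub X_ne by blast
lemma Xs_all: "\<forall>i<m. closed (Xs i) \<and> convex (Xs i) \<and> Xs i \<noteq> {}"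
  using Xs_closed Xs_convex Xs_ne by auto

definition genF :: "nat \<Rightarrow> 'w set set" where
  "genF K = (\<Union>j<K. rv_events M (G j) borel \<union> rv_events M (H j) borel \<union> rv_events M (l j) (count_space UNIV))"
definition genFh :: "nat \<Rightarrow> 'w set set" where
  "genFh K = genF K \<union> rv_events M (G K) borel \<union> rv_events M (l K) (count_space UNIV)"

lemma NF_eq: "hist_F M G H l K = sigma (space M) (genF K)"
  unfolding hist_F_def genF_def by simp
lemma NH_eq: "hist_Fh M G H l K = sigma (space M) (genFh K)"
  unfolding hist_Fh_def genFh_def genF_def by simp

lemma genF_sets: "genF K \<subseteq> sets M"
  unfolding genF_def using G_meas H_meas l_meas by (auto dest!: rv_events_sub)
lemma genFh_sets: "genFh K \<subseteq> sets M"
  unfolding genFh_def using genF_sets G_meas l_meas by (auto dest!: rv_events_sub)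
lemma genF_pow: "genF K \<subseteq> Pow (space M)"
  using genF_sets sets.sets_into_space by blast
lemma genFh_pow: "genFh K \<subseteq> Pow (space M)"
  using genFh_sets sets.sets_into_space by blast

lemma subalg_NF: "subalgebra M (hist_F M G H l K)"
  unfolding NF_eq by (rule sigma_subalg[OF genF_sets])
lemma subalg_NH: "subalgebra M (hist_Fh M G H l K)"
  unfolding NH_eq by (rule sigma_subalg[OF genFh_sets])
lemma space_NF: "space (hist_F M G H l K) = space M"
  using subalg_NF unfolding subalgebra_def by simp
lemma space_NH: "space (hist_Fh M G H l K) = space M"
  using subalg_NH unfolding subalgebra_def by simp

lemma sfs_NF: "sigma_finite_subalgebra M (hist_F M G H l K)"
  by (rule finite_measure_subalgebra_is_sigma_finite)
     (simp add: finite_measure_subalgebra_def finite_measure_subalgebra_axioms_def subalg_NF P.finite_measure_axioms)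
lemma sfs_NH: "sigma_finite_subalgebra M (hist_Fh M G H l K)"
  by (rule finite_measure_subalgebra_is_sigma_finite)
     (simp add: finite_measure_subalgebra_def finite_measure_subalgebra_axioms_def subalg_NH P.finite_measure_axioms)

lemma G_NF: "j < K \<Longrightarrow> G j \<in> borel_measurable (hist_F M G H l K)"
  unfolding NF_eq by (rule rv_meas_sigma[OF _ genF_pow]) (auto simp: genF_def)
lemma H_NF: "j < K \<Longrightarrow> H j \<in> borel_measurable (hist_F M G H l K)"
  unfolding NF_eq by (rule rv_meas_sigma[OF _ genF_pow]) (auto simp: genF_def)
lemma l_NF: "j < K \<Longrightarrow> l j \<in> measurable (hist_F M G H l K) (count_space UNIV)"
  unfolding NF_eq by (rule rv_meas_sigma[OF _ genF_pow]) (auto simp: genF_def)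

lemma x_NF: "k \<le> K \<Longrightarrow> x k \<in> borel_measurable (hist_F M G H l K)"
proof (induction k)
  case 0
  have "(\<lambda>\<omega>. x0) \<in> borel_measurable (hist_F M G H l K)" by simp
  moreover have "\<forall>\<omega>\<in>space (hist_F M G H l K). x0 = x 0 \<omega>" using x_init by (simp add: space_NF)
  ultimately show ?case using measurable_cong by (smt (verit, best))
next
  case (Suc k)
  then have kK: "k < K" by simp
  have [measurable]: "x k \<in> borel_measurable (hist_F M G H l K)" using Suc by simp
  have [measurable]: "G k \<in> borel_measurable (hist_F M G H l K)" "H k \<in> borel_measurable (hist_F M G H l K)"
    using G_NF H_NF kK by auto
  have xhm[measurable]: "(\<lambda>\<omega>. closest_point (Xs (l k \<omega>)) (x k \<omega> - \<gamma> k *\<^sub>R G k \<omega>)) \<in> borel_measurable (hist_F M G H l K)"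
    by (rule closest_meas[OF _ l_NF[OF kK] _ Xs_all]) (auto simp: space_NF l_range)
  have "(\<lambda>\<omega>. closest_point
                        {y. (x k \<omega> - \<gamma> k *\<^sub>R G k \<omega> - closest_point (Xs (l k \<omega>)) (x k \<omega> - \<gamma> k *\<^sub>R G k \<omega>)) \<bullet> (y - closest_point (Xs (l k \<omega>)) (x k \<omega> - \<gamma> k *\<^sub>R G k \<omega>)) \<le> 0}
                        (x k \<omega> - \<gamma> k *\<^sub>R H k \<omega>)) \<in> borel_measurable (hist_F M G H l K)"
    by (rule hsp_meas) measurable
  moreover have "\<forall>\<omega>\<in>space (hist_F M G H l K). x (Suc k) \<omega> = closest_point
                        {y. (x k \<omega> - \<gamma> k *\<^sub>R G k \<omega> - closest_point (Xs (l k \<omega>)) (x k \<omega> - \<gamma> k *\<^sub>R G k \<omega>)) \<bullet> (y - closest_point (Xs (l k \<omega>)) (x k \<omega> - \<gamma> k *\<^sub>R G k \<omega>)) \<le> 0}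
                        (x k \<omega> - \<gamma> k *\<^sub>R H k \<omega>)"
    using step_full step_half by (simp add: space_NF)
  ultimately show ?case using measurable_cong by (smt (verit, best))
qed

lemma xh_NF: "k < K \<Longrightarrow> xh k \<in> borel_measurable (hist_F M G H l K)"
proof -
  assume kK: "k < K"
  have [measurable]: "x k \<in> borel_measurable (hist_F M G H l K)" using x_NF kK by simp
  have [measurable]: "G k \<in> borel_measurable (hist_F M G H l K)" using G_NF kK by auto
  have "(\<lambda>\<omega>. closest_point (Xs (l k \<omega>)) (x k \<omega> - \<gamma> k *\<^sub>R G k \<omega>)) \<in> borel_measurable (hist_F M G H l K)"
    by (rule closest_meas[OF _ l_NF[OF kK] _ Xs_all]) (auto simp: space_NF l_range)
  moreover have "\<forall>\<omega>\<in>space (hist_F M G H l K). xh k \<omega> = closest_point (Xs (l k \<omega>)) (x k \<omega> - \<gamma> k *\<^sub>R G k \<omega>)"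
    using step_half by (simp add: space_NF)
  ultimately show ?thesis using measurable_cong by (smt (verit, best))
qed

lemma x_M[measurable]: "x k \<in> borel_measurable M"
  using measurable_from_subalg[OF subalg_NF x_NF[of k k]] by simp
lemma xh_M[measurable]: "xh k \<in> borel_measurable M"
  using measurable_from_subalg[OF subalg_NF xh_NF[of k "Suc k"]] by simp
lemma G_M[measurable]: "G k \<in> borel_measurable M" using G_meas by simp
lemma H_M[measurable]: "H k \<in> borel_measurable M" using H_meas by simp
lemma l_M[measurable]: "l k \<in> measurable M (count_space UNIV)" using l_meas by simp

end

context rsse begin

lemma F_lip: "norm (F u - F v) \<le> max L 0 * norm (u - v)"
  using Lip[rule_format, of u v] by (smt (verit) max.cobounded1 mult_right_mono norm_ge_zero)

lemma F_cont: "continuous_on UNIV F"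
proof (rule lipschitz_on_continuous_on)
  show "(max L 0)-lipschitz_on UNIV F"
    unfolding lipschitz_on_def using F_lip by (simp add: dist_norm)
qed

lemma F_borel[measurable]: "F \<in> borel_measurable borel"
  using F_cont by (rule borel_measurable_continuous_onI)

lemma noise_G:
  "(\<integral>\<^sup>+\<omega>. ennreal ((norm (G k \<omega> - F (x k \<omega>)))\<^sup>2) \<partial>M)
     \<le> (\<integral>\<^sup>+\<omega>. ennreal (\<nu>1\<^sup>2 * (norm (x k \<omega>))\<^sup>2 + \<nu>2\<^sup>2) \<partial>M)"
proof -
  interpret S: sigma_finite_subalgebra M "hist_F M G H l k" by (rule sfs_NF)
  let ?g = "\<lambda>\<omega>. ennreal ((norm (G k \<omega> - F (x k \<omega>)))\<^sup>2)"
  have "(\<integral>\<^sup>+\<omega>. 1 * nn_cond_exp M (hist_F M G H l k) ?g \<omega> \<partial>M) = (\<integral>\<^sup>+\<omega>. 1 * ?g \<omega> \<partial>M)"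
    by (rule S.nn_cond_exp_intg) measurable
  then have "(\<integral>\<^sup>+\<omega>. ?g \<omega> \<partial>M) = (\<integral>\<^sup>+\<omega>. nn_cond_exp M (hist_F M G H l k) ?g \<omega> \<partial>M)" by simp
  also have "\<dots> \<le> (\<integral>\<^sup>+\<omega>. ennreal (\<nu>1\<^sup>2 * (norm (x k \<omega>))\<^sup>2 + \<nu>2\<^sup>2) \<partial>M)"
    using noise1m[rule_format, of k] unfolding cond_second_moment_le_def
    by (intro nn_integral_mono_AE) auto
  finally show ?thesis .
qed

lemma noise_H:
  "(\<integral>\<^sup>+\<omega>. ennreal ((norm (H k \<omega> - F (xh k \<omega>)))\<^sup>2) \<partial>M)
     \<le> (\<integral>\<^sup>+\<omega>. ennreal (\<nu>1\<^sup>2 * (norm (xh k \<omega>))\<^sup>2 + \<nu>2\<^sup>2) \<partial>M)"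
proof -
  interpret S: sigma_finite_subalgebra M "hist_Fh M G H l k" by (rule sfs_NH)
  let ?g = "\<lambda>\<omega>. ennreal ((norm (H k \<omega> - F (xh k \<omega>)))\<^sup>2)"
  have "(\<integral>\<^sup>+\<omega>. 1 * nn_cond_exp M (hist_Fh M G H l k) ?g \<omega> \<partial>M) = (\<integral>\<^sup>+\<omega>. 1 * ?g \<omega> \<partial>M)"
    by (rule S.nn_cond_exp_intg) measurable
  then have "(\<integral>\<^sup>+\<omega>. ?g \<omega> \<partial>M) = (\<integral>\<^sup>+\<omega>. nn_cond_exp M (hist_Fh M G H l k) ?g \<omega> \<partial>M)" by simp
  also have "\<dots> \<le> (\<integral>\<^sup>+\<omega>. ennreal (\<nu>1\<^sup>2 * (norm (xh k \<omega>))\<^sup>2 + \<nu>2\<^sup>2) \<partial>M)"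
    using noise2m[rule_format, of k] unfolding cond_second_moment_le_def
    by (intro nn_integral_mono_AE) auto
  finally show ?thesis .
qed

lemma samp:
  assumes i: "i < m" and g[measurable]: "g \<in> borel_measurable (hist_F M G H l k)"
  shows "(\<integral>\<^sup>+\<omega>. g \<omega> \<partial>M) * ennreal (\<rho> i / m)
     \<le> (\<integral>\<^sup>+\<omega>. g \<omega> * indicator {\<omega>\<in>space M. l k \<omega> = i} \<omega> \<partial>M)"
proof -
  interpret S: sigma_finite_subalgebra M "hist_F M G H l k" by (rule sfs_NF)
  let ?S = "{\<omega>\<in>space M. l k \<omega> = i}"
  let ?N = "hist_F M G H l k"
  have Sm[measurable]: "?S \<in> sets M" by measurable
  have gM[measurable]: "g \<in> borel_measurable M" by (rule measurable_from_subalg[OF subalg_NF g])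
  have AE1: "AE \<omega> in M. ennreal (\<rho> i / m) \<le> nn_cond_exp M ?N (\<lambda>\<omega>. ennreal (indicator ?S \<omega>)) \<omega>"
    using sampling[rule_format, OF i, of k]
  proof (rule AE_mp, intro AE_I2 impI)
    fix \<omega> assume h: "\<rho> i / real m \<le> real_cond_exp M ?N (indicator ?S) \<omega>"
    let ?Y = "nn_cond_exp M ?N (\<lambda>\<omega>. ennreal (indicator ?S \<omega>)) \<omega>"
    have "real_cond_exp M ?N (indicator ?S) \<omega> \<le> enn2real ?Y"
      unfolding real_cond_exp_def by simp
    with h have "\<rho> i / real m \<le> enn2real ?Y" by linarith
    then have "ennreal (\<rho> i / m) \<le> ennreal (enn2real ?Y)" by (rule ennreal_leI)
    also have "\<dots> \<le> ?Y" by (simp add: ennreal_enn2real_if)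
    finally show "ennreal (\<rho> i / m) \<le> ?Y" .
  qed
  have "(\<integral>\<^sup>+\<omega>. g \<omega> \<partial>M) * ennreal (\<rho> i / m) = (\<integral>\<^sup>+\<omega>. g \<omega> * ennreal (\<rho> i / m) \<partial>M)"
    by (simp add: nn_integral_multc)
  also have "\<dots> \<le> (\<integral>\<^sup>+\<omega>. g \<omega> * nn_cond_exp M ?N (\<lambda>\<omega>. ennreal (indicator ?S \<omega>)) \<omega> \<partial>M)"
    by (rule nn_integral_mono_AE, rule AE_mp[OF AE1], rule AE_I2) (auto intro: mult_left_mono)
  also have "\<dots> = (\<integral>\<^sup>+\<omega>. g \<omega> * ennreal (indicator ?S \<omega>) \<partial>M)"
    by (rule S.nn_cond_exp_intg) measurable
  also have "\<dots> = (\<integral>\<^sup>+\<omega>. g \<omega> * indicator ?S \<omega> \<partial>M)"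
    by (simp add: ennreal_indicator)
  finally show ?thesis .
qed

end

context rsse begin

definition dd :: "nat \<Rightarrow> 'w \<Rightarrow> real" where "dd k \<omega> = infdist (x k \<omega>) X"
definition phi :: "nat \<Rightarrow> 'a \<Rightarrow> real" where "phi i v = (norm (v - closest_point (Xs i) v))\<^sup>2"
definition rmin :: real where "rmin = Min (\<rho> ` {..<m})"

lemma infdist_borel[measurable]: "(\<lambda>v. infdist v X) \<in> borel_measurable borel"
  by (rule borel_measurable_continuous_onI) (intro continuous_intros)

lemma dd_M[measurable]: "dd k \<in> borel_measurable M"
  unfolding dd_def by measurable

lemma dd_nonneg: "dd k \<omega> \<ge> 0" unfolding dd_def by (rule infdist_nonneg)

lemma rmin_pos: "rmin > 0"
  unfolding rmin_def using m_pos \<rho>_range by (subst Min_gr_iff) (auto simp: lessThan_empty_iff)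
lemma rmin_le: "i < m \<Longrightarrow> rmin \<le> \<rho> i"
  unfolding rmin_def by (rule Min_le) auto

lemma pw_step:
  assumes \<omega>: "\<omega> \<in> space M" and eps: "\<epsilon> > 0"
  shows "(dd (Suc k) \<omega>)\<^sup>2 + (1 + \<epsilon>) * phi (l k \<omega>) (x k \<omega>)
     \<le> (1 + \<epsilon>) * (dd k \<omega>)\<^sup>2 + (1 + 1/\<epsilon>) * ((\<gamma> k)\<^sup>2 * (8 * (norm (G k \<omega>))\<^sup>2 + 2 * (norm (H k \<omega>))\<^sup>2))"
proof -
  have li: "l k \<omega> < m" using l_range \<omega> by auto
  have gp: "\<gamma> k \<ge> 0" using \<gamma>_pos less_imp_le by blast
  have "x (Suc k) \<omega> = closest_point {y. (x k \<omega> - \<gamma> k *\<^sub>R G k \<omega> - closest_point (Xs (l k \<omega>)) (x k \<omega> - \<gamma> k *\<^sub>R G k \<omega>)) \<bullet> (y - closest_point (Xs (l k \<omega>)) (x k \<omega> - \<gamma> k *\<^sub>R G k \<omega>)) \<le> 0} (x k \<omega> - \<gamma> k *\<^sub>R H k \<omega>)"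
    using step_full step_half \<omega> by simp
  then show ?thesis unfolding dd_def phi_def
    using geo_step[of "Xs (l k \<omega>)" X \<epsilon> "\<gamma> k" "x k \<omega>" "G k \<omega>" "H k \<omega>"]
      Xs_closed Xs_convex li X_sub X_convex X_closed X_ne eps gp by simp
qed

lemma phi_sum:
  assumes \<omega>: "\<omega> \<in> space M"
  shows "ennreal (phi (l k \<omega>) v) = (\<Sum>i<m. ennreal (phi i v) * indicator {\<omega>\<in>space M. l k \<omega> = i} \<omega>)"
proof -
  have li: "l k \<omega> < m" using l_range \<omega> by auto
  have "(\<Sum>i<m. ennreal (phi i v) * indicator {\<omega>\<in>space M. l k \<omega> = i} \<omega>)
      = (\<Sum>i<m. if l k \<omega> = i then ennreal (phi i v) else 0)"
    using \<omega> by (intro sum.cong) (auto simp: indicator_def)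
  also have "\<dots> = ennreal (phi (l k \<omega>) v)" using li by (simp add: sum.delta)
  finally show ?thesis by simp
qed

lemma phi_lower: "(infdist v X)\<^sup>2 \<le> \<eta> * (\<Sum>i<m. phi i v)"
proof -
  have fin: "finite ((\<lambda>i. phi i v) ` {..<m})" "(\<lambda>i. phi i v) ` {..<m} \<noteq> {}" using m_pos by (auto simp: lessThan_empty_iff)
  obtain j where j: "j < m" "Max ((\<lambda>i. phi i v) ` {..<m}) = phi j v"
    using Max_in[OF fin] by blast
  have "phi j v \<le> (\<Sum>i<m. phi i v)"
    using j by (intro member_le_sum) (auto simp: phi_def)
  then have "Max ((\<lambda>i. phi i v) ` {..<m}) \<le> (\<Sum>i<m. phi i v)" using j by simp
  moreover have "(infdist v X)\<^sup>2 \<le> \<eta> * Max ((\<lambda>i. phi i v) ` {..<m})"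
    using linreg infdist_cp[OF X_closed X_ne, of v] unfolding phi_def by simp
  ultimately show ?thesis using \<eta>_pos by (smt (verit) mult_left_mono)
qed

lemma phi_NF: "i < m \<Longrightarrow> (\<lambda>\<omega>. phi i (x k \<omega>)) \<in> borel_measurable (hist_F M G H l k)"
proof -
  assume i: "i < m"
  have "continuous_on UNIV (\<lambda>v. (norm (v - closest_point (Xs i) v))\<^sup>2)"
    using Xs_all i by (intro continuous_intros continuous_on_closest_point) auto
  then have "(\<lambda>v. phi i v) \<in> borel_measurable borel"
    unfolding phi_def by (rule borel_measurable_continuous_onI)
  then show ?thesis using x_NF[of k k] by (simp add: measurable_compose[where f="x k"])
qed

lemma phi_M[measurable]: "i < m \<Longrightarrow> (\<lambda>\<omega>. phi i (x k \<omega>)) \<in> borel_measurable M"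
  using measurable_from_subalg[OF subalg_NF phi_NF] .

lemma E_phi:
  "(\<integral>\<^sup>+\<omega>. ennreal ((dd k \<omega>)\<^sup>2) \<partial>M) * ennreal (rmin / (m * \<eta>))
    \<le> (\<integral>\<^sup>+\<omega>. ennreal (phi (l k \<omega>) (x k \<omega>)) \<partial>M)"
proof -
  let ?S = "\<lambda>i. {\<omega>\<in>space M. l k \<omega> = i}"
  have pm: "\<And>i. i < m \<Longrightarrow> (\<lambda>\<omega>. ennreal (phi i (x k \<omega>))) \<in> borel_measurable M"
    using phi_M by measurable
  have Sm: "\<And>i. ?S i \<in> sets M" by measurable
  have s1: "(\<integral>\<^sup>+\<omega>. ennreal (phi (l k \<omega>) (x k \<omega>)) \<partial>M)
      = (\<Sum>i<m. \<integral>\<^sup>+\<omega>. ennreal (phi i (x k \<omega>)) * indicator (?S i) \<omega> \<partial>M)"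
  proof -
    have "(\<integral>\<^sup>+\<omega>. ennreal (phi (l k \<omega>) (x k \<omega>)) \<partial>M)
      = (\<integral>\<^sup>+\<omega>. (\<Sum>i<m. ennreal (phi i (x k \<omega>)) * indicator (?S i) \<omega>) \<partial>M)"
      by (intro nn_integral_cong) (simp add: phi_sum)
    also have "\<dots> = (\<Sum>i<m. \<integral>\<^sup>+\<omega>. ennreal (phi i (x k \<omega>)) * indicator (?S i) \<omega> \<partial>M)"
      using pm Sm by (intro nn_integral_sum) auto
    finally show ?thesis .
  qed
  have s2: "(\<Sum>i<m. (\<integral>\<^sup>+\<omega>. ennreal (phi i (x k \<omega>)) \<partial>M) * ennreal (\<rho> i / m))
      \<le> (\<Sum>i<m. \<integral>\<^sup>+\<omega>. ennreal (phi i (x k \<omega>)) * indicator (?S i) \<omega> \<partial>M)"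
  proof (intro sum_mono)
    fix i assume "i \<in> {..<m}"
    then have i: "i < m" by simp
    have "(\<lambda>\<omega>. ennreal (phi i (x k \<omega>))) \<in> borel_measurable (hist_F M G H l k)"
      using phi_NF[OF i] by measurable
    then show "(\<integral>\<^sup>+\<omega>. ennreal (phi i (x k \<omega>)) \<partial>M) * ennreal (\<rho> i / m)
        \<le> (\<integral>\<^sup>+\<omega>. ennreal (phi i (x k \<omega>)) * indicator (?S i) \<omega> \<partial>M)"
      by (rule samp[OF i])
  qed
  have s3: "(\<Sum>i<m. (\<integral>\<^sup>+\<omega>. ennreal (phi i (x k \<omega>)) \<partial>M) * ennreal (rmin / m))
      \<le> (\<Sum>i<m. (\<integral>\<^sup>+\<omega>. ennreal (phi i (x k \<omega>)) \<partial>M) * ennreal (\<rho> i / m))"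
    using rmin_le by (intro sum_mono mult_left_mono ennreal_leI divide_right_mono) auto
  have s4: "(\<Sum>i<m. (\<integral>\<^sup>+\<omega>. ennreal (phi i (x k \<omega>)) \<partial>M) * ennreal (rmin / m))
      = (\<integral>\<^sup>+\<omega>. (\<Sum>i<m. ennreal (phi i (x k \<omega>))) \<partial>M) * ennreal (rmin / m)"
  proof -
    have "(\<integral>\<^sup>+\<omega>. (\<Sum>i<m. ennreal (phi i (x k \<omega>))) \<partial>M) = (\<Sum>i<m. (\<integral>\<^sup>+\<omega>. ennreal (phi i (x k \<omega>)) \<partial>M))"
      using pm by (intro nn_integral_sum) auto
    then show ?thesis by (simp add: sum_distrib_right)
  qed
  have s5: "(\<integral>\<^sup>+\<omega>. ennreal ((dd k \<omega>)\<^sup>2) * ennreal (1 / \<eta>) \<partial>M) \<le> (\<integral>\<^sup>+\<omega>. (\<Sum>i<m. ennreal (phi i (x k \<omega>))) \<partial>M)"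
  proof (intro nn_integral_mono)
    fix \<omega>
    have "(dd k \<omega>)\<^sup>2 * (1 / \<eta>) \<le> (\<Sum>i<m. phi i (x k \<omega>))"
      using phi_lower[of "x k \<omega>"] \<eta>_pos unfolding dd_def by (simp add: field_simps)
    then have "ennreal ((dd k \<omega>)\<^sup>2 * (1 / \<eta>)) \<le> ennreal (\<Sum>i<m. phi i (x k \<omega>))" by (rule ennreal_leI)
    then show "ennreal ((dd k \<omega>)\<^sup>2) * ennreal (1 / \<eta>) \<le> (\<Sum>i<m. ennreal (phi i (x k \<omega>)))"
      using \<eta>_pos by (simp add: ennreal_mult[symmetric] phi_def del: ennreal_le_iff)
  qed
  have "(\<integral>\<^sup>+\<omega>. ennreal ((dd k \<omega>)\<^sup>2) * ennreal (1 / \<eta>) \<partial>M) * ennreal (rmin / m)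
      \<le> (\<integral>\<^sup>+\<omega>. (\<Sum>i<m. ennreal (phi i (x k \<omega>))) \<partial>M) * ennreal (rmin / m)"
    using s5 by (rule mult_right_mono) simp
  also have "\<dots> \<le> (\<integral>\<^sup>+\<omega>. ennreal (phi (l k \<omega>) (x k \<omega>)) \<partial>M)"
    using s1 s2 s3 s4 by simp
  finally have "(\<integral>\<^sup>+\<omega>. ennreal ((dd k \<omega>)\<^sup>2) * ennreal (1 / \<eta>) \<partial>M) * ennreal (rmin / m)
      \<le> (\<integral>\<^sup>+\<omega>. ennreal (phi (l k \<omega>) (x k \<omega>)) \<partial>M)" .
  moreover have "(\<integral>\<^sup>+\<omega>. ennreal ((dd k \<omega>)\<^sup>2) * ennreal (1 / \<eta>) \<partial>M) * ennreal (rmin / m)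
      = (\<integral>\<^sup>+\<omega>. ennreal ((dd k \<omega>)\<^sup>2) \<partial>M) * ennreal (rmin / (m * \<eta>))"
  proof -
    have "(\<integral>\<^sup>+\<omega>. ennreal ((dd k \<omega>)\<^sup>2) * ennreal (1 / \<eta>) \<partial>M) = (\<integral>\<^sup>+\<omega>. ennreal ((dd k \<omega>)\<^sup>2) \<partial>M) * ennreal (1 / \<eta>)"
      by (rule nn_integral_multc) measurable
    moreover have "ennreal (1 / \<eta>) * ennreal (rmin / m) = ennreal (rmin / (m * \<eta>))"
      using \<eta>_pos rmin_pos by (simp add: ennreal_mult[symmetric])
    ultimately show ?thesis by (simp add: mult.assoc)
  qed
  ultimately show ?thesis by simp
qed

end

lemma int_dom:
  fixes f g :: "'w \<Rightarrow> real"
  assumes "integrable M g" "f \<in> borel_measurable M" "\<forall>\<omega>\<in>space M. 0 \<le> f \<omega> \<and> f \<omega> \<le> g \<omega>"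
  shows "integrable M f"
  by (rule Bochner_Integration.integrable_bound[OF assms(1,2)]) (use assms(3) in \<open>auto intro!: AE_I2\<close>)

lemma int_nn:
  fixes f g :: "'w \<Rightarrow> real"
  assumes g: "integrable M g" and f[measurable]: "f \<in> borel_measurable M"
    and fp: "\<forall>\<omega>\<in>space M. 0 \<le> f \<omega>" and gp: "\<forall>\<omega>\<in>space M. 0 \<le> g \<omega>"
    and le: "(\<integral>\<^sup>+\<omega>. ennreal (f \<omega>) \<partial>M) \<le> (\<integral>\<^sup>+\<omega>. ennreal (g \<omega>) \<partial>M)"
  shows "integrable M f \<and> integral\<^sup>L M f \<le> integral\<^sup>L M g"
proof -
  have eg: "(\<integral>\<^sup>+\<omega>. ennreal (g \<omega>) \<partial>M) = ennreal (integral\<^sup>L M g)"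
    using gp by (intro nn_integral_eq_integral[OF g]) (auto intro!: AE_I2)
  have "(\<integral>\<^sup>+\<omega>. ennreal (norm (f \<omega>)) \<partial>M) = (\<integral>\<^sup>+\<omega>. ennreal (f \<omega>) \<partial>M)"
    using fp by (intro nn_integral_cong) auto
  also have "\<dots> < \<infinity>" using le eg by (simp add: le_less_trans)
  finally have fi: "integrable M f" by (intro integrableI_bounded) auto
  have "(\<integral>\<^sup>+\<omega>. ennreal (f \<omega>) \<partial>M) = ennreal (integral\<^sup>L M f)"
    using fp by (intro nn_integral_eq_integral[OF fi]) (auto intro!: AE_I2)
  with le eg have "ennreal (integral\<^sup>L M f) \<le> ennreal (integral\<^sup>L M g)" by simp
  moreover have "integral\<^sup>L M g \<ge> 0" using gp by (intro integral_nonneg_AE) (auto intro!: AE_I2)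
  ultimately show ?thesis using fi by simp
qed

lemma sq2: "((s::real) + t)\<^sup>2 \<le> 2 * s\<^sup>2 + 2 * t\<^sup>2"
  using sq_split[of 1 s t] by simp

context rsse begin

definition pp :: 'a where "pp = (SOME p. p \<in> X)"
lemma pp_X: "pp \<in> X" unfolding pp_def using X_ne by (simp add: some_in_eq)

definition Lp :: real where "Lp = max L 0"
definition c0 :: real where "c0 = 2 * \<nu>1\<^sup>2 * (norm pp)\<^sup>2 + \<nu>2\<^sup>2 + 2 * (norm (F pp))\<^sup>2"
definition c1 :: real where "c1 = 2 * \<nu>1\<^sup>2 + 2 * Lp\<^sup>2"
definition Qf :: "'a \<Rightarrow> real" where "Qf v = (norm (v - pp))\<^sup>2"

lemma c0_nonneg: "c0 \<ge> 0" unfolding c0_def by simp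
lemma c1_nonneg: "c1 \<ge> 0" unfolding c1_def by simp
lemma Qf_nonneg: "Qf v \<ge> 0" unfolding Qf_def by simp

lemma Qf_borel[measurable]: "Qf \<in> borel_measurable borel"
  unfolding Qf_def by measurable

lemma nu_bnd: "\<nu>1\<^sup>2 * (norm v)\<^sup>2 + \<nu>2\<^sup>2 \<le> c0 + c1 * Qf v"
proof -
  have "norm v \<le> norm pp + norm (v - pp)" by (rule norm_triangle_sub)
  then have "(norm v)\<^sup>2 \<le> (norm pp + norm (v - pp))\<^sup>2" by (simp add: power_mono)
  also have "\<dots> \<le> 2 * (norm pp)\<^sup>2 + 2 * Qf v" unfolding Qf_def by (rule sq2)
  finally have "\<nu>1\<^sup>2 * (norm v)\<^sup>2 \<le> \<nu>1\<^sup>2 * (2 * (norm pp)\<^sup>2 + 2 * Qf v)" by (simp add: mult_left_mono)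
  then show ?thesis unfolding c0_def c1_def using Qf_nonneg[of v]
    by (simp add: algebra_simps) (smt (verit) mult_nonneg_nonneg zero_le_power2)
qed

lemma F_bnd: "(norm (F v))\<^sup>2 \<le> c0 + c1 * Qf v"
proof -
  have "norm (F v) \<le> norm (F pp) + norm (F v - F pp)" by (rule norm_triangle_sub)
  also have "norm (F v - F pp) \<le> Lp * norm (v - pp)" unfolding Lp_def by (rule F_lip)
  finally have "(norm (F v))\<^sup>2 \<le> (norm (F pp) + Lp * norm (v - pp))\<^sup>2" by (simp add: power_mono)
  also have "\<dots> \<le> 2 * (norm (F pp))\<^sup>2 + 2 * (Lp * norm (v - pp))\<^sup>2" by (rule sq2)
  also have "\<dots> = 2 * (norm (F pp))\<^sup>2 + 2 * Lp\<^sup>2 * Qf v" unfolding Qf_def by (simp add: power_mult_distrib)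
  finally show ?thesis unfolding c0_def c1_def using Qf_nonneg[of v]
    by (simp add: algebra_simps) (smt (verit) mult_nonneg_nonneg zero_le_power2)
qed

lemma Q_dd: "Qf v \<le> 2 * (infdist v X)\<^sup>2 + 2 * D\<^sup>2"
proof -
  define c where "c = closest_point X v"
  have cX: "c \<in> X" unfolding c_def using closest_point_in_set X_closed X_ne by blast
  have "(norm (c - pp))\<^sup>2 \<le> D\<^sup>2" using diam cX pp_X by blast
  then have cD: "norm (c - pp) \<le> D" using D_pos by (simp add: abs_le_square_iff power2_le_iff_abs_le)
  have "norm (v - pp) \<le> norm (v - c) + norm (c - pp)" by (rule norm_diff_triangle_le) auto
  also have "\<dots> \<le> infdist v X + D" using cD infdist_cp[OF X_closed X_ne, of v] unfolding c_def by simp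
  finally have "Qf v \<le> (infdist v X + D)\<^sup>2" unfolding Qf_def by (simp add: power_mono)
  also have "\<dots> \<le> 2 * (infdist v X)\<^sup>2 + 2 * D\<^sup>2" by (rule sq2)
  finally show ?thesis .
qed

lemma Q_xh:
  assumes \<omega>: "\<omega> \<in> space M"
  shows "Qf (xh k \<omega>) \<le> 2 * Qf (x k \<omega>) + 2 * ((\<gamma> k)\<^sup>2 * (norm (G k \<omega>))\<^sup>2)"
proof -
  have li: "l k \<omega> < m" using l_range \<omega> by auto
  have ppS: "pp \<in> Xs (l k \<omega>)" using X_sub[OF li] pp_X by blast
  have "norm (xh k \<omega> - pp) = norm (closest_point (Xs (l k \<omega>)) (x k \<omega> - \<gamma> k *\<^sub>R G k \<omega>) - closest_point (Xs (l k \<omega>)) pp)"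
    using step_half \<omega> ppS by (simp add: closest_point_self)
  also have "\<dots> \<le> norm ((x k \<omega> - \<gamma> k *\<^sub>R G k \<omega>) - pp)"
    using Xs_all li by (intro proj_nonexp) auto
  also have "\<dots> \<le> norm (x k \<omega> - pp) + norm (\<gamma> k *\<^sub>R G k \<omega>)"
  proof -
    have "(x k \<omega> - \<gamma> k *\<^sub>R G k \<omega>) - pp = (x k \<omega> - pp) - \<gamma> k *\<^sub>R G k \<omega>" by simp
    then show ?thesis using norm_triangle_ineq4 by metis
  qed
  also have "norm (\<gamma> k *\<^sub>R G k \<omega>) = \<gamma> k * norm (G k \<omega>)" using \<gamma>_pos by (simp add: less_imp_le)
  finally have "Qf (xh k \<omega>) \<le> (norm (x k \<omega> - pp) + \<gamma> k * norm (G k \<omega>))\<^sup>2"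
    unfolding Qf_def by (simp add: power_mono)
  also have "\<dots> \<le> 2 * Qf (x k \<omega>) + 2 * ((\<gamma> k)\<^sup>2 * (norm (G k \<omega>))\<^sup>2)"
    using sq2[of "norm (x k \<omega> - pp)" "\<gamma> k * norm (G k \<omega>)"] unfolding Qf_def by (simp add: power_mult_distrib)
  finally show ?thesis .
qed

lemma G_bnd: "(norm g)\<^sup>2 \<le> 2 * (norm (g - F v))\<^sup>2 + 2 * (c0 + c1 * Qf v)"
proof -
  have "norm g \<le> norm (g - F v) + norm (F v)" using norm_triangle_sub[of g "F v"] by simp
  then have "(norm g)\<^sup>2 \<le> (norm (g - F v) + norm (F v))\<^sup>2" by (simp add: power_mono)
  also have "\<dots> \<le> 2 * (norm (g - F v))\<^sup>2 + 2 * (norm (F v))\<^sup>2" by (rule sq2)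
  moreover have "2 * (norm (F v))\<^sup>2 \<le> 2 * (c0 + c1 * Qf v)" using F_bnd[of v] by simp
  ultimately show ?thesis by linarith
qed

end

context rsse begin

definition qq :: real where "qq = rmin / (m * \<eta>)"
lemma qq_pos: "qq > 0" unfolding qq_def using rmin_pos \<eta>_pos m_pos by simp

lemma phil_eq:
  assumes \<omega>: "\<omega> \<in> space M"
  shows "phi (l k \<omega>) (x k \<omega>) = (\<Sum>i<m. phi i (x k \<omega>) * indicator {\<omega>\<in>space M. l k \<omega> = i} \<omega>)"
proof -
  have li: "l k \<omega> < m" using l_range \<omega> by auto
  have "(\<Sum>i<m. phi i (x k \<omega>) * indicator {\<omega>\<in>space M. l k \<omega> = i} \<omega>)
      = (\<Sum>i<m. if l k \<omega> = i then phi i (x k \<omega>) else 0)"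
    using \<omega> by (intro sum.cong) (auto simp: indicator_def)
  also have "\<dots> = phi (l k \<omega>) (x k \<omega>)" using li by (simp add: sum.delta)
  finally show ?thesis by simp
qed

lemma phil_M[measurable]: "(\<lambda>\<omega>. phi (l k \<omega>) (x k \<omega>)) \<in> borel_measurable M"
proof -
  have "(\<lambda>\<omega>. \<Sum>i<m. phi i (x k \<omega>) * indicator {\<omega>\<in>space M. l k \<omega> = i} \<omega>) \<in> borel_measurable M"
  proof (intro borel_measurable_sum borel_measurable_times)
    fix i assume "i \<in> {..<m}"
    then show "(\<lambda>\<omega>. phi i (x k \<omega>)) \<in> borel_measurable M" using phi_M by simp
    show "indicator {\<omega> \<in> space M. l k \<omega> = i} \<in> borel_measurable M" by measurable
  qed
  moreover have "\<forall>\<omega>\<in>space M. (\<Sum>i<m. phi i (x k \<omega>) * indicator {\<omega>\<in>space M. l k \<omega> = i} \<omega>) = phi (l k \<omega>) (x k \<omega>)"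
    using phil_eq by simp
  ultimately show ?thesis using measurable_cong by (smt (verit, best))
qed

declare P.prob_space[simp]
lemma int_const: "integrable M (\<lambda>\<omega>. c::real)" by simp
lemma intg_const: "(\<integral>\<omega>. (c::real) \<partial>M) = c" by (simp add: P.prob_space)

lemma one_step:
  assumes ia: "integrable M (\<lambda>\<omega>. (dd k \<omega>)\<^sup>2)"
  defines "a \<equiv> (\<integral>\<omega>. (dd k \<omega>)\<^sup>2 \<partial>M)"
  shows "integrable M (\<lambda>\<omega>. (dd (Suc k) \<omega>)\<^sup>2) \<and>
    (\<exists>eg eh. eg \<le> 4 * c0 + 4 * c1 * (2 * a + 2 * D\<^sup>2) \<and>
       eh \<le> 4 * c0 + 4 * c1 * (2 * (2 * a + 2 * D\<^sup>2) + 2 * ((\<gamma> k)\<^sup>2 * eg)) \<and> eg \<ge> 0 \<and> eh \<ge> 0 \<and>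
       (\<integral>\<omega>. (dd (Suc k) \<omega>)\<^sup>2 \<partial>M) \<le> (1 + qq/2) * (1 - qq) * a + (1 + 1/(qq/2)) * ((\<gamma> k)\<^sup>2 * (8 * eg + 2 * eh)))"
proof -
  let ?fd = "\<lambda>\<omega>. (dd k \<omega>)\<^sup>2"
  let ?fQ = "\<lambda>\<omega>. Qf (x k \<omega>)"
  let ?fw = "\<lambda>\<omega>. (norm (G k \<omega> - F (x k \<omega>)))\<^sup>2"
  let ?gw = "\<lambda>\<omega>. \<nu>1\<^sup>2 * (norm (x k \<omega>))\<^sup>2 + \<nu>2\<^sup>2"
  let ?fG = "\<lambda>\<omega>. (norm (G k \<omega>))\<^sup>2"
  let ?fQh = "\<lambda>\<omega>. Qf (xh k \<omega>)"
  let ?fw' = "\<lambda>\<omega>. (norm (H k \<omega> - F (xh k \<omega>)))\<^sup>2"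
  let ?gw' = "\<lambda>\<omega>. \<nu>1\<^sup>2 * (norm (xh k \<omega>))\<^sup>2 + \<nu>2\<^sup>2"
  let ?fH = "\<lambda>\<omega>. (norm (H k \<omega>))\<^sup>2"
  let ?fd' = "\<lambda>\<omega>. (dd (Suc k) \<omega>)\<^sup>2"
  let ?fp = "\<lambda>\<omega>. phi (l k \<omega>) (x k \<omega>)"
  define \<epsilon> where "\<epsilon> = qq / 2"
  have eps: "\<epsilon> > 0" unfolding \<epsilon>_def using qq_pos by simp
  have g2: "(\<gamma> k)\<^sup>2 \<ge> 0" by simp
  have iQ: "integrable M ?fQ"
    by (rule int_dom[of _ "\<lambda>\<omega>. 2 * ?fd \<omega> + 2 * D\<^sup>2"]) (use ia Q_dd Qf_nonneg in \<open>auto simp: dd_def\<close>)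
  define qx where "qx = (\<integral>\<omega>. ?fQ \<omega> \<partial>M)"
  have qx: "qx \<le> 2 * a + 2 * D\<^sup>2"
  proof -
    have "qx \<le> (\<integral>\<omega>. 2 * ?fd \<omega> + 2 * D\<^sup>2 \<partial>M)" unfolding qx_def
      using iQ ia Q_dd by (intro integral_mono) (auto simp: dd_def)
    also have "\<dots> = 2 * a + 2 * D\<^sup>2" unfolding a_def using ia by (simp add: intg_const)
    finally show ?thesis .
  qed
  have igw: "integrable M ?gw"
    by (rule int_dom[of _ "\<lambda>\<omega>. c0 + c1 * ?fQ \<omega>"]) (use iQ nu_bnd \<nu>_nonneg in auto)
  have fw: "integrable M ?fw \<and> (\<integral>\<omega>. ?fw \<omega> \<partial>M) \<le> (\<integral>\<omega>. ?gw \<omega> \<partial>M)"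
    by (rule int_nn[OF igw]) (use noise_G in auto)
  have gw: "(\<integral>\<omega>. ?gw \<omega> \<partial>M) \<le> c0 + c1 * qx"
  proof -
    have "(\<integral>\<omega>. ?gw \<omega> \<partial>M) \<le> (\<integral>\<omega>. c0 + c1 * ?fQ \<omega> \<partial>M)"
      using igw iQ nu_bnd by (intro integral_mono) auto
    also have "\<dots> = c0 + c1 * qx" unfolding qx_def using iQ by (simp add: intg_const)
    finally show ?thesis .
  qed
  have iG: "integrable M ?fG"
    by (rule int_dom[of _ "\<lambda>\<omega>. 2 * ?fw \<omega> + 2 * (c0 + c1 * ?fQ \<omega>)"]) (use fw iQ G_bnd in auto)
  define eg where "eg = (\<integral>\<omega>. ?fG \<omega> \<partial>M)"
  have eg: "eg \<le> 4 * c0 + 4 * c1 * qx"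
  proof -
    have "eg \<le> (\<integral>\<omega>. 2 * ?fw \<omega> + 2 * (c0 + c1 * ?fQ \<omega>) \<partial>M)" unfolding eg_def
      using iG fw iQ G_bnd by (intro integral_mono) auto
    also have "\<dots> = 2 * (\<integral>\<omega>. ?fw \<omega> \<partial>M) + 2 * (c0 + c1 * qx)"
      unfolding qx_def using fw iQ by (simp add: intg_const)
    finally have e1: "eg \<le> 2 * (\<integral>\<omega>. ?fw \<omega> \<partial>M) + 2 * (c0 + c1 * qx)" .
    have "(\<integral>\<omega>. ?fw \<omega> \<partial>M) \<le> c0 + c1 * qx" using conjunct2[OF fw] gw by linarith
    with e1 have "eg \<le> 4 * c0 + 4 * (c1 * qx)" by (smt (verit))
    then show ?thesis by (simp add: mult.assoc)
  qed
  have eg0: "eg \<ge> 0" unfolding eg_def by simp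
  have iQh: "integrable M ?fQh"
    by (rule int_dom[of _ "\<lambda>\<omega>. 2 * ?fQ \<omega> + 2 * ((\<gamma> k)\<^sup>2 * ?fG \<omega>)"]) (use iQ iG Q_xh Qf_nonneg in auto)
  define qh where "qh = (\<integral>\<omega>. ?fQh \<omega> \<partial>M)"
  have qh: "qh \<le> 2 * qx + 2 * ((\<gamma> k)\<^sup>2 * eg)"
  proof -
    have "qh \<le> (\<integral>\<omega>. 2 * ?fQ \<omega> + 2 * ((\<gamma> k)\<^sup>2 * ?fG \<omega>) \<partial>M)" unfolding qh_def
      using iQh iQ iG Q_xh by (intro integral_mono) auto
    also have "\<dots> = 2 * qx + 2 * ((\<gamma> k)\<^sup>2 * eg)" unfolding qx_def eg_def using iQ iG by simp
    finally show ?thesis .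
  qed
  have igw': "integrable M ?gw'"
    by (rule int_dom[of _ "\<lambda>\<omega>. c0 + c1 * ?fQh \<omega>"]) (use iQh nu_bnd \<nu>_nonneg in auto)
  have fw': "integrable M ?fw' \<and> (\<integral>\<omega>. ?fw' \<omega> \<partial>M) \<le> (\<integral>\<omega>. ?gw' \<omega> \<partial>M)"
    by (rule int_nn[OF igw']) (use noise_H in auto)
  have gw': "(\<integral>\<omega>. ?gw' \<omega> \<partial>M) \<le> c0 + c1 * qh"
  proof -
    have "(\<integral>\<omega>. ?gw' \<omega> \<partial>M) \<le> (\<integral>\<omega>. c0 + c1 * ?fQh \<omega> \<partial>M)"
      using igw' iQh nu_bnd by (intro integral_mono) auto
    also have "\<dots> = c0 + c1 * qh" unfolding qh_def using iQh by (simp add: intg_const)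
    finally show ?thesis .
  qed
  have iH: "integrable M ?fH"
    by (rule int_dom[of _ "\<lambda>\<omega>. 2 * ?fw' \<omega> + 2 * (c0 + c1 * ?fQh \<omega>)"]) (use fw' iQh G_bnd in auto)
  define eh where "eh = (\<integral>\<omega>. ?fH \<omega> \<partial>M)"
  have eh: "eh \<le> 4 * c0 + 4 * c1 * qh"
  proof -
    have "eh \<le> (\<integral>\<omega>. 2 * ?fw' \<omega> + 2 * (c0 + c1 * ?fQh \<omega>) \<partial>M)" unfolding eh_def
      using iH fw' iQh G_bnd by (intro integral_mono) auto
    also have "\<dots> = 2 * (\<integral>\<omega>. ?fw' \<omega> \<partial>M) + 2 * (c0 + c1 * qh)"
      unfolding qh_def using fw' iQh by (simp add: intg_const)
    finally have e1: "eh \<le> 2 * (\<integral>\<omega>. ?fw' \<omega> \<partial>M) + 2 * (c0 + c1 * qh)" .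
    have "(\<integral>\<omega>. ?fw' \<omega> \<partial>M) \<le> c0 + c1 * qh" using conjunct2[OF fw'] gw' by linarith
    with e1 have "eh \<le> 4 * c0 + 4 * (c1 * qh)" by (smt (verit))
    then show ?thesis by (simp add: mult.assoc)
  qed
  have eh0: "eh \<ge> 0" unfolding eh_def by simp
  let ?R = "\<lambda>\<omega>. (1 + \<epsilon>) * ?fd \<omega> + (1 + 1/\<epsilon>) * ((\<gamma> k)\<^sup>2 * (8 * ?fG \<omega> + 2 * ?fH \<omega>))"
  have iR: "integrable M ?R" using ia iG iH by simp
  have pw: "\<forall>\<omega>\<in>space M. ?fd' \<omega> + (1 + \<epsilon>) * ?fp \<omega> \<le> ?R \<omega>"
    using pw_step eps by blast
  have fp0: "\<And>\<omega>. ?fp \<omega> \<ge> 0" unfolding phi_def by simp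
  have ifd': "integrable M ?fd'"
    by (rule int_dom[OF iR]) (use pw fp0 eps in \<open>auto intro: add_increasing2 order_trans[rotated]\<close>)
  have iR': "integrable M (\<lambda>\<omega>. ?R \<omega> / (1 + \<epsilon>))" using iR by simp
  have "\<forall>\<omega>\<in>space M. 0 \<le> ?fp \<omega> \<and> ?fp \<omega> \<le> ?R \<omega> / (1 + \<epsilon>)"
  proof
    fix \<omega> assume w: "\<omega> \<in> space M"
    have "(1 + \<epsilon>) * ?fp \<omega> \<le> ?R \<omega>" using pw w by (smt (verit) zero_le_power2)
    then have "?fp \<omega> \<le> ?R \<omega> / (1 + \<epsilon>)" using eps by (simp add: pos_le_divide_eq mult.commute)
    then show "0 \<le> ?fp \<omega> \<and> ?fp \<omega> \<le> ?R \<omega> / (1 + \<epsilon>)" using fp0 by simp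
  qed
  then have ifp: "integrable M ?fp" using int_dom[OF iR' phil_M] by blast
  have "(\<integral>\<omega>. ?fd' \<omega> + (1 + \<epsilon>) * ?fp \<omega> \<partial>M) \<le> (\<integral>\<omega>. ?R \<omega> \<partial>M)"
    using ifd' ifp iR pw by (intro integral_mono) auto
  then have main: "(\<integral>\<omega>. ?fd' \<omega> \<partial>M) + (1 + \<epsilon>) * (\<integral>\<omega>. ?fp \<omega> \<partial>M)
      \<le> (1 + \<epsilon>) * a + (1 + 1/\<epsilon>) * ((\<gamma> k)\<^sup>2 * (8 * eg + 2 * eh))"
    unfolding a_def eg_def eh_def using ifd' ifp ia iG iH by simp
  have "(\<integral>\<^sup>+\<omega>. ennreal (?fd \<omega>) \<partial>M) * ennreal qq \<le> (\<integral>\<^sup>+\<omega>. ennreal (?fp \<omega>) \<partial>M)"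
    using E_phi unfolding qq_def .
  moreover have "(\<integral>\<^sup>+\<omega>. ennreal (?fd \<omega>) \<partial>M) = ennreal a"
    unfolding a_def by (intro nn_integral_eq_integral[OF ia]) auto
  moreover have "(\<integral>\<^sup>+\<omega>. ennreal (?fp \<omega>) \<partial>M) = ennreal (\<integral>\<omega>. ?fp \<omega> \<partial>M)"
    using fp0 by (intro nn_integral_eq_integral[OF ifp]) auto
  ultimately have "ennreal (a * qq) \<le> ennreal (\<integral>\<omega>. ?fp \<omega> \<partial>M)"
    using qq_pos by (simp add: ennreal_mult'')
  moreover have "(\<integral>\<omega>. ?fp \<omega> \<partial>M) \<ge> 0" using fp0 by simp
  ultimately have samp: "a * qq \<le> (\<integral>\<omega>. ?fp \<omega> \<partial>M)" by simp
  have "(1 + \<epsilon>) * (a * qq) \<le> (1 + \<epsilon>) * (\<integral>\<omega>. ?fp \<omega> \<partial>M)"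
    using samp eps by (intro mult_left_mono) auto
  with main have fin: "(\<integral>\<omega>. ?fd' \<omega> \<partial>M) \<le> (1 + \<epsilon>) * (1 - qq) * a + (1 + 1/\<epsilon>) * ((\<gamma> k)\<^sup>2 * (8 * eg + 2 * eh))"
    by (simp add: algebra_simps)
  have egb: "eg \<le> 4 * c0 + 4 * c1 * (2 * a + 2 * D\<^sup>2)"
    using eg qx c1_nonneg by (smt (verit) mult_left_mono)
  have qhb: "qh \<le> 2 * (2 * a + 2 * D\<^sup>2) + 2 * ((\<gamma> k)\<^sup>2 * eg)" using qh qx by (smt (verit))
  have ehb: "eh \<le> 4 * c0 + 4 * c1 * (2 * (2 * a + 2 * D\<^sup>2) + 2 * ((\<gamma> k)\<^sup>2 * eg))"
    using eh qhb c1_nonneg by (smt (verit) mult_left_mono)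
  show ?thesis using ifd' egb ehb eg0 eh0 fin unfolding \<epsilon>_def by blast
qed

end

context rsse begin

definition aa :: "nat \<Rightarrow> real" where "aa k = (\<integral>\<omega>. (dd k \<omega>)\<^sup>2 \<partial>M)"

lemma aa_nonneg: "aa k \<ge> 0" unfolding aa_def by simp

lemma int_dd2: "integrable M (\<lambda>\<omega>. (dd k \<omega>)\<^sup>2)"
proof (induction k)
  case 0
  show ?case
    by (rule int_dom[of _ "\<lambda>\<omega>. (infdist x0 X)\<^sup>2"]) (use x_init in \<open>auto simp: dd_def\<close>)
next
  case (Suc k)
  then show ?case using one_step by blast
qed

lemma rec_all:
  assumes G: "\<forall>k. \<gamma> k \<le> \<Gamma>"
  shows "\<exists>\<theta> B0 B1. 0 \<le> \<theta> \<and> \<theta> < 1 \<and> 0 \<le> B0 \<and> 0 \<le> B1 \<and>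
     (\<forall>k. aa (Suc k) \<le> \<theta> * aa k + (\<gamma> k)\<^sup>2 * (B0 + B1 * aa k))"
proof -
  define q where "q = qq"
  have q: "q > 0" unfolding q_def by (rule qq_pos)
  define \<theta> where "\<theta> = max 0 ((1 + q/2) * (1 - q))"
  have th: "0 \<le> \<theta>" "\<theta> < 1" unfolding \<theta>_def using q by (auto simp: algebra_simps add_pos_pos)
  define e0 where "e0 = 4 * c0 + 8 * c1 * D\<^sup>2"
  define e1 where "e1 = 8 * c1"
  define h0 where "h0 = 4 * c0 + 16 * c1 * D\<^sup>2 + 8 * c1 * \<Gamma>\<^sup>2 * e0"
  define h1 where "h1 = 16 * c1 + 8 * c1 * \<Gamma>\<^sup>2 * e1"
  define B0 where "B0 = (1 + 1/(q/2)) * (8 * e0 + 2 * h0)"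
  define B1 where "B1 = (1 + 1/(q/2)) * (8 * e1 + 2 * h1)"
  have c0: "c0 \<ge> 0" and c1: "c1 \<ge> 0" by (rule c0_nonneg, rule c1_nonneg)
  have pos: "e0 \<ge> 0" "e1 \<ge> 0" "h0 \<ge> 0" "h1 \<ge> 0"
    unfolding e0_def e1_def h0_def h1_def using c0 c1 by auto
  then have B: "B0 \<ge> 0" "B1 \<ge> 0" unfolding B0_def B1_def using q by auto
  have "\<forall>k. aa (Suc k) \<le> \<theta> * aa k + (\<gamma> k)\<^sup>2 * (B0 + B1 * aa k)"
  proof
    fix k
    define a where "a = aa k"
    have a0: "a \<ge> 0" unfolding a_def by (rule aa_nonneg)
    have gg: "(\<gamma> k)\<^sup>2 \<le> \<Gamma>\<^sup>2" using G \<gamma>_pos by (meson less_imp_le power_mono)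
    obtain eg eh where egh: "eg \<le> 4 * c0 + 4 * c1 * (2 * a + 2 * D\<^sup>2)"
       "eh \<le> 4 * c0 + 4 * c1 * (2 * (2 * a + 2 * D\<^sup>2) + 2 * ((\<gamma> k)\<^sup>2 * eg))" "eg \<ge> 0" "eh \<ge> 0"
       "aa (Suc k) \<le> (1 + qq/2) * (1 - qq) * a + (1 + 1/(qq/2)) * ((\<gamma> k)\<^sup>2 * (8 * eg + 2 * eh))"
      using one_step[OF int_dd2[of k]] unfolding a_def aa_def by blast
    have eg: "eg \<le> e0 + e1 * a" using egh(1) unfolding e0_def e1_def by (simp add: algebra_simps)
    have "(\<gamma> k)\<^sup>2 * eg \<le> \<Gamma>\<^sup>2 * (e0 + e1 * a)"
      using gg eg egh(3) by (meson mult_mono zero_le_power2 order_trans)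
    then have "c1 * ((\<gamma> k)\<^sup>2 * eg) \<le> c1 * (\<Gamma>\<^sup>2 * (e0 + e1 * a))" using c1 by (rule mult_left_mono)
    then have eh: "eh \<le> h0 + h1 * a" using egh(2) unfolding h0_def h1_def by (simp add: algebra_simps)
    have s: "8 * eg + 2 * eh \<le> (8 * e0 + 2 * h0) + (8 * e1 + 2 * h1) * a"
      using eg eh by (simp add: algebra_simps)
    have "(1 + 1/(q/2)) * ((\<gamma> k)\<^sup>2 * (8 * eg + 2 * eh)) \<le> (1 + 1/(q/2)) * ((\<gamma> k)\<^sup>2 * ((8 * e0 + 2 * h0) + (8 * e1 + 2 * h1) * a))"
      using s q by (intro mult_left_mono) auto
    also have "\<dots> = (\<gamma> k)\<^sup>2 * (B0 + B1 * a)" unfolding B0_def B1_def by (simp add: algebra_simps)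
    finally have t2: "(1 + 1/(q/2)) * ((\<gamma> k)\<^sup>2 * (8 * eg + 2 * eh)) \<le> (\<gamma> k)\<^sup>2 * (B0 + B1 * a)" .
    have t1: "(1 + q/2) * (1 - q) * a \<le> \<theta> * a" unfolding \<theta>_def using a0 by (intro mult_right_mono) auto
    show "aa (Suc k) \<le> \<theta> * aa k + (\<gamma> k)\<^sup>2 * (B0 + B1 * aa k)"
      using egh(5) t1 t2 unfolding a_def q_def by linarith
  qed
  then show ?thesis using th B by blast
qed

end

lemma seq_eventually:
  fixes a b :: "nat \<Rightarrow> real"
  assumes a0: "\<forall>k. 0 \<le> a k" and th: "0 \<le> \<theta>" "\<theta> < 1" and B: "0 \<le> B0" "0 \<le> B1"
    and b0: "\<forall>k. 0 \<le> b k" and bl: "b \<longlonglongrightarrow> 0"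
    and rec: "\<forall>k. a (Suc k) \<le> \<theta> * a k + b k * (B0 + B1 * a k)"
  shows "\<exists>K. \<forall>k\<ge>K. a (Suc k) \<le> ((1 + \<theta>) / 2) * a k + B0 * b k"
proof -
  have "(\<lambda>k. b k * B1) \<longlonglongrightarrow> 0 * B1" by (intro tendsto_intros bl)
  then have "eventually (\<lambda>k. b k * B1 < (1 - \<theta>) / 2) sequentially"
    using th by (intro order_tendstoD) auto
  then obtain K where K: "\<forall>k\<ge>K. b k * B1 < (1 - \<theta>) / 2" by (auto simp: eventually_sequentially)
  have "a (Suc k) \<le> ((1 + \<theta>) / 2) * a k + B0 * b k" if k: "k \<ge> K" for k
  proof -
    have "(b k * B1) * a k \<le> ((1 - \<theta>) / 2) * a k" using K k a0 by (intro mult_right_mono) auto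
    moreover have "b k * (B0 + B1 * a k) = B0 * b k + (b k * B1) * a k" by (simp add: algebra_simps)
    moreover have "\<theta> * a k + ((1 - \<theta>) / 2) * a k = ((1 + \<theta>) / 2) * a k" by (simp add: field_simps)
    ultimately show ?thesis using rec[rule_format, of k] by linarith
  qed
  then show ?thesis by blast
qed

lemma seq_summable:
  fixes a b :: "nat \<Rightarrow> real"
  assumes a0: "\<forall>k. 0 \<le> a k" and th: "0 \<le> \<theta>" "\<theta> < 1" and B: "0 \<le> B0" "0 \<le> B1"
    and b0: "\<forall>k. 0 \<le> b k" and sb: "summable b"
    and rec: "\<forall>k. a (Suc k) \<le> \<theta> * a k + b k * (B0 + B1 * a k)"
  shows "summable a"
proof -
  obtain K where K: "\<forall>k\<ge>K. a (Suc k) \<le> ((1 + \<theta>) / 2) * a k + B0 * b k"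
    using seq_eventually[OF a0 th B b0 summable_LIMSEQ_zero[OF sb] rec] by blast
  define t where "t = (1 + \<theta>) / 2"
  have t: "0 \<le> t" "t < 1" unfolding t_def using th by auto
  define c where "c n = a (n + K)" for n
  define d where "d n = b (n + K)" for n
  have sd: "summable d" unfolding d_def using sb by simp
  have d0: "\<And>n. 0 \<le> d n" unfolding d_def using b0 by simp
  have c0: "\<And>n. 0 \<le> c n" unfolding c_def using a0 by simp
  have cr: "c (Suc n) \<le> t * c n + B0 * d n" for n
    using K[rule_format, of "n + K"] unfolding c_def d_def t_def by simp
  have sdl: "(\<Sum>n<N. d n) \<le> suminf d" for N
    using sd d0 by (intro sum_le_suminf) auto
  have bnd: "(\<Sum>n<N. c n) \<le> (c 0 + B0 * suminf d) / (1 - t)" for N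
  proof (cases N)
    case 0
    have "0 \<le> c 0 + B0 * suminf d" using c0 B sd d0 by (simp add: suminf_nonneg)
    then show ?thesis using 0 t by simp
  next
    case (Suc N')
    define SS where "SS = (\<Sum>n<Suc N'. c n)"
    define S0 where "S0 = (\<Sum>n<N'. c n)"
    define DD where "DD = (\<Sum>n<N'. d n)"
    have e1: "SS = c 0 + (\<Sum>n<N'. c (Suc n))" unfolding SS_def by (rule sum.lessThan_Suc_shift)
    have "(\<Sum>n<N'. c (Suc n)) \<le> (\<Sum>n<N'. t * c n + B0 * d n)" by (intro sum_mono cr)
    also have "\<dots> = t * S0 + B0 * DD" unfolding S0_def DD_def by (simp add: sum.distrib sum_distrib_left)
    finally have e2: "(\<Sum>n<N'. c (Suc n)) \<le> t * S0 + B0 * DD" .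
    have e3: "S0 \<le> SS" unfolding S0_def SS_def using c0[of N'] by simp
    have e4: "B0 * DD \<le> B0 * suminf d" unfolding DD_def using sdl B by (intro mult_left_mono) auto
    have e5: "t * S0 \<le> t * SS" using e3 t by (intro mult_left_mono) auto
    have "SS \<le> c 0 + t * SS + B0 * suminf d" using e1 e2 e4 e5 by linarith
    then have "(1 - t) * SS \<le> c 0 + B0 * suminf d" by (simp add: algebra_simps)
    then have "SS \<le> (c 0 + B0 * suminf d) / (1 - t)" using t by (simp add: pos_le_divide_eq mult.commute)
    then show ?thesis unfolding Suc SS_def .
  qed
  have "summable c" by (rule summableI_nonneg_bounded[OF c0 bnd])
  then show ?thesis unfolding c_def by simp
qed

lemma seq_rate:
  fixes a b :: "nat \<Rightarrow> real"
  assumes a0: "\<forall>k. 0 \<le> a k" and th: "0 \<le> \<theta>" "\<theta> < 1" and B: "0 \<le> B0" "0 \<le> B1"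
    and b0: "\<forall>k. 0 < b k" and bl: "b \<longlonglongrightarrow> 0"
    and ratio: "\<forall>r>1. eventually (\<lambda>k. b k \<le> r * b (Suc k)) sequentially"
    and rec: "\<forall>k. a (Suc k) \<le> \<theta> * a k + b k * (B0 + B1 * a k)"
  shows "\<exists>c. \<forall>k. a k \<le> c * b k"
proof -
  obtain K1 where K1: "\<forall>k\<ge>K1. a (Suc k) \<le> ((1 + \<theta>) / 2) * a k + B0 * b k"
    using seq_eventually[OF a0 th B _ bl rec] b0 less_imp_le by blast
  define t where "t = (1 + \<theta>) / 2"
  have t: "0 \<le> t" "t < 1" unfolding t_def using th by auto
  define r where "r = 2 / (1 + t)"
  have lam: "r > 1" "t * r < 1" unfolding r_def using t by (auto simp: field_simps)
  obtain K2 where K2: "\<forall>k\<ge>K2. b k \<le> r * b (Suc k)"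
    using ratio lam by (auto simp: eventually_sequentially)
  define K where "K = max K1 K2"
  define c1 where "c1 = max (a K / b K) (B0 * r / (1 - t * r))"
  have c1p: "c1 \<ge> 0" unfolding c1_def using B lam by (simp add: le_max_iff_disj)
  have main: "a k \<le> c1 * b k" if "k \<ge> K" for k
    using that
  proof (induction k rule: dec_induct)
    case base
    have "a K / b K \<le> c1" unfolding c1_def by simp
    then show ?case using b0 by (simp add: pos_divide_le_eq)
  next
    case (step k)
    have "a (Suc k) \<le> t * a k + B0 * b k" using K1 step(1) unfolding K_def t_def by simp
    also have "\<dots> \<le> t * (c1 * b k) + B0 * b k" using step(3) t B by (intro add_mono mult_left_mono) auto
    also have "\<dots> = (t * c1 + B0) * b k" by (simp add: algebra_simps)
    also have "\<dots> \<le> (t * c1 + B0) * (r * b (Suc k))"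
      using K2 step(1) t c1p B unfolding K_def by (intro mult_left_mono) auto
    also have "\<dots> = (t * c1 * r + B0 * r) * b (Suc k)" by (simp add: algebra_simps)
    also have "\<dots> \<le> c1 * b (Suc k)"
    proof (intro mult_right_mono)
      have "B0 * r / (1 - t * r) \<le> c1" unfolding c1_def by simp
      then have "B0 * r \<le> c1 * (1 - t * r)" using lam by (simp add: pos_divide_le_eq)
      then show "t * c1 * r + B0 * r \<le> c1" by (simp add: algebra_simps)
      show "0 \<le> b (Suc k)" using b0 less_imp_le by blast
    qed
    finally show ?case .
  qed
  define c2 where "c2 = (\<Sum>k<K. a k / b k)"
  have c2: "a k \<le> c2 * b k" if "k < K" for k
  proof -
    have "a k / b k \<le> c2" unfolding c2_def using that a0 b0
      by (intro member_le_sum) (auto intro: divide_nonneg_pos less_imp_le)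
    then show ?thesis using b0 by (simp add: pos_divide_le_eq)
  qed
  have "a k \<le> max c1 c2 * b k" for k
  proof (cases "k < K")
    case True
    then have "a k \<le> c2 * b k" by (rule c2)
    also have "\<dots> \<le> max c1 c2 * b k" using b0 by (intro mult_right_mono) (auto intro: less_imp_le)
    finally show ?thesis .
  next
    case False
    then have "a k \<le> c1 * b k" using main by simp
    also have "\<dots> \<le> max c1 c2 * b k" using b0 by (intro mult_right_mono) (auto intro: less_imp_le)
    finally show ?thesis .
  qed
  then show ?thesis by blast
qed

context rsse begin

lemma eta_ge1: "\<eta> \<ge> 1"
proof -
  obtain e :: 'a where e: "e \<in> Basis" using nonempty_Basis by blast
  define z where "z = pp + (D + 1) *\<^sub>R e"
  have nz: "norm (z - pp) = D + 1" unfolding z_def using e D_pos by simp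
  have zX: "z \<notin> X"
  proof
    assume "z \<in> X"
    then have "(norm (z - pp))\<^sup>2 \<le> D\<^sup>2" using diam pp_X by blast
    then show False using nz D_pos by (simp add: power_mono_iff)
  qed
  define c where "c = closest_point X z"
  have cX: "c \<in> X" unfolding c_def using closest_point_in_set X_closed X_ne by blast
  have d: "norm (z - c) > 0" using cX zX by auto
  have "Max ((\<lambda>i. (norm (z - closest_point (Xs i) z))\<^sup>2) ` {..<m}) \<le> (norm (z - c))\<^sup>2"
  proof (subst Max_le_iff)
    show "finite ((\<lambda>i. (norm (z - closest_point (Xs i) z))\<^sup>2) ` {..<m})" by simp
    show "(\<lambda>i. (norm (z - closest_point (Xs i) z))\<^sup>2) ` {..<m} \<noteq> {}" using m_pos by (auto simp: lessThan_empty_iff)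
    show "\<forall>a\<in>(\<lambda>i. (norm (z - closest_point (Xs i) z))\<^sup>2) ` {..<m}. a \<le> (norm (z - c))\<^sup>2"
    proof
      fix a assume "a \<in> (\<lambda>i. (norm (z - closest_point (Xs i) z))\<^sup>2) ` {..<m}"
      then obtain i where i: "i < m" and a: "a = (norm (z - closest_point (Xs i) z))\<^sup>2" by auto
      have "dist z (closest_point (Xs i) z) \<le> dist z c"
        using closest_point_le[of "Xs i" c z] Xs_closed i cX X_sub by auto
      then show "a \<le> (norm (z - c))\<^sup>2" unfolding a by (simp add: dist_norm power_mono)
    qed
  qed
  then have "(norm (z - c))\<^sup>2 \<le> \<eta> * (norm (z - c))\<^sup>2"
    using linreg[rule_format, of z] \<eta>_pos unfolding c_def by (smt (verit) mult_left_mono)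
  then show ?thesis using d by simp
qed

lemma rmin_le1: "rmin \<le> 1" using rmin_le[of 0] \<rho>_range m_pos by force

lemma kbar_ge1:
  assumes t: "t > 0"
  shows "kbar (1 - rmin\<^sup>2 / (64 * (real m)\<^sup>2 * \<eta>\<^sup>2)) t \<ge> 1"
proof -
  define \<beta> where "\<beta> = 1 - rmin\<^sup>2 / (64 * (real m)\<^sup>2 * \<eta>\<^sup>2)"
  have r2: "rmin\<^sup>2 \<le> 1" "rmin\<^sup>2 > 0" using rmin_le1 rmin_pos by (auto simp: power_le_one)
  have m2: "(real m)\<^sup>2 \<ge> 1" using m_pos by simp
  have e2: "\<eta>\<^sup>2 \<ge> 1" using eta_ge1 by simp
  have "(real m)\<^sup>2 * \<eta>\<^sup>2 \<ge> 1 * 1" using m2 e2 by (intro mult_mono) auto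
  then have den: "64 * (real m)\<^sup>2 * \<eta>\<^sup>2 \<ge> 64" by simp
  have "rmin\<^sup>2 / (64 * (real m)\<^sup>2 * \<eta>\<^sup>2) \<le> 1 / 64"
    using r2 den by (simp add: frac_le)
  moreover have "rmin\<^sup>2 / (64 * (real m)\<^sup>2 * \<eta>\<^sup>2) > 0" using r2(2) den by (intro divide_pos_pos) (auto simp: mult.commute)
  ultimately have b: "0 < \<beta>" "\<beta> < 1" unfolding \<beta>_def by auto
  define v where "v = 1 - \<beta> / 2"
  have v: "0 < v" "v < 1" unfolding v_def using b by auto
  define u where "u = v powr (1 / t)"
  have u: "0 < u" "u < 1" unfolding u_def using v t
    by (auto intro: powr_less_mono2[of "1/t" v 1, simplified])
  have "1 / (1 - u) > 1" using u by (simp add: field_simps)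
  then have c2: "(2::int) \<le> \<lceil>1 / (1 - u)\<rceil>" by (simp add: le_ceiling_iff)
  have "kbar \<beta> t = nat (\<lceil>1 / (1 - u)\<rceil> - 1)" unfolding kbar_def v_def[symmetric] u_def[symmetric] by simp
  moreover have "nat (\<lceil>1 / (1 - u)\<rceil> - 1) \<ge> 1" using c2 by linarith
  ultimately show ?thesis unfolding \<beta>_def[symmetric] by simp
qed

lemma part_a:
  assumes sg: "summable (\<lambda>k. (\<gamma> k)\<^sup>2)"
  shows "AE \<omega> in M. (\<lambda>k. infdist (x k \<omega>) X) \<longlonglongrightarrow> 0"
proof -
  define S where "S = (\<Sum>k. (\<gamma> k)\<^sup>2)"
  have gS: "\<gamma> k \<le> sqrt S" for k
  proof -
    have "(\<gamma> k)\<^sup>2 \<le> S" unfolding S_def using sg by (intro sum_le_suminf[of _ "{k}", simplified]) auto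
    then show ?thesis using \<gamma>_pos real_le_rsqrt by (simp add: less_imp_le)
  qed
  obtain \<theta> B0 B1 where th: "0 \<le> \<theta>" "\<theta> < 1" "0 \<le> B0" "0 \<le> B1"
    and rec: "\<forall>k. aa (Suc k) \<le> \<theta> * aa k + (\<gamma> k)\<^sup>2 * (B0 + B1 * aa k)"
    using rec_all[of "sqrt S"] gS by blast
  have sa: "summable aa"
    by (rule seq_summable[OF _ th(1,2,3,4) _ sg]) (use aa_nonneg rec in auto)
  have "(\<integral>\<^sup>+\<omega>. (\<Sum>k. ennreal ((dd k \<omega>)\<^sup>2)) \<partial>M) = (\<Sum>k. \<integral>\<^sup>+\<omega>. ennreal ((dd k \<omega>)\<^sup>2) \<partial>M)"
    by (rule nn_integral_suminf) measurable
  also have "\<dots> = (\<Sum>k. ennreal (aa k))"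
    unfolding aa_def by (intro suminf_cong nn_integral_eq_integral int_dd2) auto
  also have "\<dots> = ennreal (\<Sum>k. aa k)" using sa aa_nonneg by (intro suminf_ennreal2) auto
  finally have "(\<integral>\<^sup>+\<omega>. (\<Sum>k. ennreal ((dd k \<omega>)\<^sup>2)) \<partial>M) \<noteq> \<infinity>" by simp
  then have "AE \<omega> in M. (\<Sum>k. ennreal ((dd k \<omega>)\<^sup>2)) \<noteq> \<infinity>"
    by (intro nn_integral_PInf_AE) measurable
  then show ?thesis
  proof (rule AE_mp, intro AE_I2 impI)
    fix \<omega> assume "(\<Sum>k. ennreal ((dd k \<omega>)\<^sup>2)) \<noteq> \<infinity>"
    then have "summable (\<lambda>k. (dd k \<omega>)\<^sup>2)" by (intro summable_suminf_not_top) auto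
    then have "(\<lambda>k. (dd k \<omega>)\<^sup>2) \<longlonglongrightarrow> 0" by (rule summable_LIMSEQ_zero)
    then have "(\<lambda>k. sqrt ((dd k \<omega>)\<^sup>2)) \<longlonglongrightarrow> sqrt 0" by (rule tendsto_real_sqrt)
    then show "(\<lambda>k. infdist (x k \<omega>) X) \<longlonglongrightarrow> 0" using dd_nonneg unfolding dd_def by simp
  qed
qed

end

context rsse begin

lemma Edd_bound:
  assumes a: "aa k \<le> C * g\<^sup>2" and C: "C > 0" and g: "g > 0"
  shows "integrable M (dd k) \<and> (\<integral>\<omega>. dd k \<omega> \<partial>M) \<le> sqrt C * g"
proof -
  have pw: "dd k \<omega> \<le> (dd k \<omega>)\<^sup>2 / (2 * s) + s / 2" if s: "s > 0" for s \<omega>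
  proof -
    have "0 \<le> (dd k \<omega> - s)\<^sup>2" by simp
    then have "2 * s * dd k \<omega> \<le> (dd k \<omega>)\<^sup>2 + s\<^sup>2" by (simp add: power2_eq_square algebra_simps)
    then show ?thesis using s by (simp add: field_simps power2_eq_square)
  qed
  have i: "integrable M (dd k)"
    by (rule int_dom[of _ "\<lambda>\<omega>. (dd k \<omega>)\<^sup>2 / (2 * 1) + 1 / 2"]) (use int_dd2 pw[of 1] dd_nonneg in auto)
  define s where "s = sqrt C * g"
  have s: "s > 0" unfolding s_def using C g by simp
  have "(\<integral>\<omega>. dd k \<omega> \<partial>M) \<le> (\<integral>\<omega>. (dd k \<omega>)\<^sup>2 / (2 * s) + s / 2 \<partial>M)"
    using i int_dd2 pw[OF s] by (intro integral_mono) auto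
  also have "\<dots> = aa k / (2 * s) + s / 2" unfolding aa_def using int_dd2 by simp
  also have "aa k / (2 * s) \<le> C * g\<^sup>2 / (2 * s)" using a s by (simp add: divide_right_mono)
  also have "C * g\<^sup>2 / (2 * s) = s / 2" unfolding s_def using C g
    by (simp add: power2_eq_square field_simps)
  finally show ?thesis using i unfolding s_def by (simp add: mult.commute)
qed

lemma part_b_gen:
  assumes t: "t > 0" and g: "\<forall>k\<ge>1. \<gamma> k = 1 / real k powr (t / 2)"
  shows "\<exists>c\<ge>0. \<forall>k\<ge>1. integrable M (\<lambda>\<omega>. infdist (x k \<omega>) X) \<and>
            (\<integral>\<omega>. infdist (x k \<omega>) X \<partial>M) \<le> c / real k powr (t / 2)"
proof -
  have gle: "\<gamma> k \<le> max (\<gamma> 0) 1" for k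
  proof (cases "k \<ge> 1")
    case True
    have "1 \<le> real k powr (t / 2)" using True t by (intro ge_one_powr_ge_zero) auto
    then have "1 / real k powr (t / 2) \<le> 1" by (simp add: divide_le_eq_1) arith
    then show ?thesis using g True by (simp add: le_max_iff_disj)
  next
    case False then have "k = 0" by simp
    then show ?thesis by simp
  qed
  obtain \<theta> B0 B1 where th: "0 \<le> \<theta>" "\<theta> < 1" "0 \<le> B0" "0 \<le> B1"
    and rec: "\<forall>k. aa (Suc k) \<le> \<theta> * aa k + (\<gamma> k)\<^sup>2 * (B0 + B1 * aa k)"
    using rec_all[of "max (\<gamma> 0) 1"] gle by blast
  have "(\<lambda>k. real k powr (- (t / 2))) \<longlonglongrightarrow> 0"
    using t by (intro tendsto_neg_powr filterlim_real_sequentially) auto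
  moreover have "eventually (\<lambda>k. real k powr (- (t / 2)) = \<gamma> k) sequentially"
    using g by (auto simp: eventually_sequentially powr_minus_divide intro!: exI[of _ 1])
  ultimately have "\<gamma> \<longlonglongrightarrow> 0" by (rule Lim_transform_eventually)
  then have bl: "(\<lambda>k. (\<gamma> k)\<^sup>2) \<longlonglongrightarrow> 0" using tendsto_power[of \<gamma> 0 sequentially 2] by simp
  have b0: "\<forall>k. 0 < (\<gamma> k)\<^sup>2" using \<gamma>_pos by (simp add: less_imp_neq[symmetric])
  have gsq: "(\<gamma> k)\<^sup>2 = 1 / real k powr t" if "k \<ge> 1" for k
  proof -
    have "(real k powr (t / 2))\<^sup>2 = real k powr t"
      by (simp add: power2_eq_square powr_add[symmetric])
    then show ?thesis using g that by (simp add: power_divide)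
  qed
  have ratio: "\<forall>r>1. eventually (\<lambda>k. (\<gamma> k)\<^sup>2 \<le> r * (\<gamma> (Suc k))\<^sup>2) sequentially"
  proof (intro allI impI)
    fix r :: real assume r: "r > 1"
    have "(\<lambda>k. 1 + 1 / real k) \<longlonglongrightarrow> 1 + 0" by (intro tendsto_intros lim_inverse_n')
    then have "(\<lambda>k. (1 + 1 / real k) powr t) \<longlonglongrightarrow> (1 + 0) powr t"
      by (intro tendsto_powr tendsto_const) auto
    then have "eventually (\<lambda>k. (1 + 1 / real k) powr t < r) sequentially"
      using r by (intro order_tendstoD) auto
    moreover have "eventually (\<lambda>k. k \<ge> 1) sequentially" by (simp add: eventually_ge_at_top)
    ultimately show "eventually (\<lambda>k. (\<gamma> k)\<^sup>2 \<le> r * (\<gamma> (Suc k))\<^sup>2) sequentially"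
    proof eventually_elim
      case (elim k)
      have kp: "real k > 0" using elim by simp
      have e: "real (Suc k) = (1 + 1 / real k) * real k" using kp by (simp add: field_simps)
      have "real (Suc k) powr t = (1 + 1 / real k) powr t * real k powr t"
        unfolding e by (rule powr_mult)
      also have "\<dots> \<le> r * real k powr t" using elim by (intro mult_right_mono) auto
      finally have h: "real (Suc k) powr t \<le> r * real k powr t" .
      have kt: "real k powr t > 0" using kp by simp
      have "1 / real k powr t \<le> r * (1 / real (Suc k) powr t)"
        using h kt r by (simp add: field_simps)
      then show ?case using gsq[of k] gsq[of "Suc k"] elim by simp
    qed
  qed
  obtain c where c: "\<forall>k. aa k \<le> c * (\<gamma> k)\<^sup>2"
  proof -
    have "\<forall>k. aa (Suc k) \<le> \<theta> * aa k + (\<gamma> k)\<^sup>2 * (B0 + B1 * aa k)" using rec by blast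
    then have "\<exists>c. \<forall>k. aa k \<le> c * (\<gamma> k)\<^sup>2"
      using seq_rate[OF _ th b0 bl ratio, of aa] aa_nonneg by blast
    then show ?thesis using that by blast
  qed
  define C where "C = max c 1"
  have C: "C > 0" unfolding C_def by simp
  have "\<forall>k\<ge>1. integrable M (\<lambda>\<omega>. infdist (x k \<omega>) X) \<and>
            (\<integral>\<omega>. infdist (x k \<omega>) X \<partial>M) \<le> sqrt C / real k powr (t / 2)"
  proof (intro allI impI)
    fix k :: nat assume k: "k \<ge> 1"
    have "aa k \<le> C * (\<gamma> k)\<^sup>2" using c[rule_format, of k] unfolding C_def
      by (smt (verit) max.cobounded1 mult_right_mono zero_le_power2)
    from Edd_bound[OF this C \<gamma>_pos[rule_format]]
    show "integrable M (\<lambda>\<omega>. infdist (x k \<omega>) X) \<and> (\<integral>\<omega>. infdist (x k \<omega>) X \<partial>M) \<le> sqrt C / real k powr (t / 2)"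
      using g k unfolding dd_def by (simp add: dd_def)
  qed
  then show ?thesis using C by (intro exI[of _ "sqrt C"]) auto
qed

end

lemma infdist_convex_comb:
  fixes X :: "'a::euclidean_space set" and y :: "nat \<Rightarrow> 'a"
  assumes X: "convex X" "closed X" "X \<noteq> {}" and I: "finite I"
    and w: "\<forall>i\<in>I. 0 \<le> w i" "sum w I = 1"
  shows "infdist (\<Sum>i\<in>I. w i *\<^sub>R y i) X \<le> (\<Sum>i\<in>I. w i * infdist (y i) X)"
proof -
  define c where "c i = closest_point X (y i)" for i
  have cX: "c i \<in> X" for i unfolding c_def using closest_point_in_set X by blast
  have sX: "(\<Sum>i\<in>I. w i *\<^sub>R c i) \<in> X" using convex_sum[OF I X(1) w(2)] w(1) cX by blast
  have "infdist (\<Sum>i\<in>I. w i *\<^sub>R y i) X \<le> dist (\<Sum>i\<in>I. w i *\<^sub>R y i) (\<Sum>i\<in>I. w i *\<^sub>R c i)"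
    by (rule infdist_le[OF sX])
  also have "\<dots> = norm (\<Sum>i\<in>I. w i *\<^sub>R (y i - c i))"
    by (simp add: dist_norm sum_subtractf scaleR_diff_right)
  also have "\<dots> \<le> (\<Sum>i\<in>I. norm (w i *\<^sub>R (y i - c i)))" by (rule norm_sum)
  also have "\<dots> = (\<Sum>i\<in>I. w i * infdist (y i) X)"
    using w(1) by (intro sum.cong) (auto simp: infdist_cp[OF X(2,3)] c_def)
  finally show ?thesis .
qed

context rsse begin

lemma part_c_gen:
  assumes E: "\<forall>k\<ge>1. integrable M (\<lambda>\<omega>. infdist (x k \<omega>) X) \<and> (\<integral>\<omega>. infdist (x k \<omega>) X \<partial>M) \<le> c / sqrt (real k)"
    and c: "c \<ge> 0" and kb: "kb \<ge> 1" and K: "K \<ge> 1"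
  defines "xbar \<equiv> (\<lambda>\<omega>. (1 / (\<Sum>k=kb + K div 2..kb + K. \<gamma> k)) *\<^sub>R
                               (\<Sum>k=kb + K div 2..kb + K. \<gamma> k *\<^sub>R x k \<omega>))"
  shows "integrable M (\<lambda>\<omega>. infdist (xbar \<omega>) X) \<and>
         (\<integral>\<omega>. infdist (xbar \<omega>) X \<partial>M) \<le> (c * sqrt 2) / sqrt (real K)"
proof -
  define I where "I = {kb + K div 2..kb + K}"
  have I: "finite I" "I \<noteq> {}" unfolding I_def by auto
  define S where "S = (\<Sum>k\<in>I. \<gamma> k)"
  have S: "S > 0" unfolding S_def using I \<gamma>_pos by (intro sum_pos) auto
  define w where "w k = \<gamma> k / S" for k
  have w0: "\<forall>k\<in>I. 0 \<le> w k" unfolding w_def using S \<gamma>_pos by (simp add: less_imp_le)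
  have w1: "sum w I = 1" unfolding w_def S_def using S unfolding S_def by (simp add: sum_divide_distrib[symmetric])
  have xb: "xbar \<omega> = (\<Sum>k\<in>I. w k *\<^sub>R x k \<omega>)" for \<omega>
    unfolding xbar_def I_def[symmetric] S_def[symmetric] w_def by (simp add: scaleR_sum_right)
  have Ik: "k \<in> I \<Longrightarrow> k \<ge> 1" for k unfolding I_def using kb by auto
  have pw: "infdist (xbar \<omega>) X \<le> (\<Sum>k\<in>I. w k * infdist (x k \<omega>) X)" for \<omega>
    unfolding xb by (rule infdist_convex_comb[OF X_convex X_closed X_ne I(1) w0 w1])
  have meas: "(\<lambda>\<omega>. infdist (xbar \<omega>) X) \<in> borel_measurable M"
    unfolding xb by measurable
  have isum: "integrable M (\<lambda>\<omega>. \<Sum>k\<in>I. w k * infdist (x k \<omega>) X)"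
  proof (rule Bochner_Integration.integrable_sum)
    fix k assume "k \<in> I"
    then have "integrable M (\<lambda>\<omega>. infdist (x k \<omega>) X)" using conjunct1[OF E[rule_format, OF Ik]] by blast
    then show "integrable M (\<lambda>\<omega>. w k * infdist (x k \<omega>) X)" by (rule integrable_mult_right)
  qed
  have int: "integrable M (\<lambda>\<omega>. infdist (xbar \<omega>) X)"
    by (rule int_dom[OF isum meas]) (use pw infdist_nonneg in auto)
  have "(\<integral>\<omega>. infdist (xbar \<omega>) X \<partial>M) \<le> (\<integral>\<omega>. (\<Sum>k\<in>I. w k * infdist (x k \<omega>) X) \<partial>M)"
    using int isum pw by (intro integral_mono) auto
  also have "\<dots> = (\<Sum>k\<in>I. w k * (\<integral>\<omega>. infdist (x k \<omega>) X \<partial>M))"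
  proof -
    have ik: "integrable M (\<lambda>\<omega>. w k * infdist (x k \<omega>) X)" if k: "k \<in> I" for k
    proof -
      have "integrable M (\<lambda>\<omega>. infdist (x k \<omega>) X)" using conjunct1[OF E[rule_format, OF Ik[OF k]]] .
      then show ?thesis by (rule integrable_mult_right)
    qed
    then show ?thesis by (simp add: Bochner_Integration.integral_sum)
  qed
  also have "\<dots> \<le> (\<Sum>k\<in>I. w k * ((c * sqrt 2) / sqrt (real K)))"
  proof (intro sum_mono mult_left_mono)
    fix k assume k: "k \<in> I"
    then have k1: "k \<ge> 1" by (rule Ik)
    have "kb + K div 2 \<le> k" using k unfolding I_def by auto
    then have "K \<le> 2 * k" using kb by linarith
    then have "sqrt (real K) \<le> sqrt 2 * sqrt (real k)"
      by (simp add: real_sqrt_mult[symmetric])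
    moreover have "0 < sqrt 2 * sqrt (real k) * sqrt (real K)" using k1 K by simp
    ultimately have "(c * sqrt 2) / (sqrt 2 * sqrt (real k)) \<le> (c * sqrt 2) / sqrt (real K)"
      using c by (intro divide_left_mono) auto
    moreover have "(c * sqrt 2) / (sqrt 2 * sqrt (real k)) = c / sqrt (real k)" by simp
    ultimately have "c / sqrt (real k) \<le> (c * sqrt 2) / sqrt (real K)" by simp
    then show "(\<integral>\<omega>. infdist (x k \<omega>) X \<partial>M) \<le> (c * sqrt 2) / sqrt (real K)"
      using conjunct2[OF E[rule_format, OF k1]] by linarith
    show "0 \<le> w k" using w0 k by blast
  qed
  also have "\<dots> = (c * sqrt 2) / sqrt (real K)" 
  proof -
    have "(\<Sum>k\<in>I. w k * ((c * sqrt 2) / sqrt (real K))) = (\<Sum>k\<in>I. w k) * ((c * sqrt 2) / sqrt (real K))"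
      by (rule sum_distrib_right[symmetric])
    then show ?thesis using w1 by simp
  qed
  finally show ?thesis using int by simp
qed

end

theorem proposition5:
  fixes M :: "'w measure"
    and m :: nat and Xs :: "nat \<Rightarrow> 'a::euclidean_space set" and X :: "'a set"
    and D L C \<nu>1 \<nu>2 \<eta> :: real and \<rho> :: "nat \<Rightarrow> real"
    and F :: "'a \<Rightarrow> 'a"
    and x xh G H :: "nat \<Rightarrow> 'w \<Rightarrow> 'a" and l :: "nat \<Rightarrow> 'w \<Rightarrow> nat"
    and \<gamma> :: "nat \<Rightarrow> real" and x0 :: 'a
  assumes prob: "prob_space M"
    and m_pos: "m \<ge> 1"
    and X_def: "X = (\<Inter>i<m. Xs i)"
    and Xs_closed: "\<forall>i<m. closed (Xs i)" and Xs_convex: "\<forall>i<m. convex (Xs i)"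
    and X_ne: "X \<noteq> {}"
    and D_pos: "D > 0" and diam: "\<forall>u\<in>X. \<forall>v\<in>X. (norm (u - v))\<^sup>2 \<le> D\<^sup>2"
    \<comment> \<open>(A1)\<close>
    and Lip: "\<forall>u v. norm (F u - F v) \<le> L * norm (u - v)"
    and mono: "\<forall>u v. (F u - F v) \<bullet> (u - v) \<ge> 0"
    \<comment> \<open>(A2)\<close>
    and sol_ne: "VI_sol X F \<noteq> {}" and sol_compact: "compact (VI_sol X F)"
    and sol_bound: "\<forall>xs\<in>VI_sol X F. norm (F xs) \<le> C"
    \<comment> \<open>random variables\<close>
    and G_meas: "\<forall>k. G k \<in> borel_measurable M" and H_meas: "\<forall>k. H k \<in> borel_measurable M"
    and l_meas: "\<forall>k. l k \<in> measurable M (count_space UNIV)"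
    and l_range: "\<forall>k. \<forall>\<omega>\<in>space M. l k \<omega> < m"
    \<comment> \<open>(A4)\<close>
    and \<nu>_nonneg: "\<nu>1 \<ge> 0" "\<nu>2 \<ge> 0"
    and noise1: "\<forall>k. cond_mean_zero M (hist_F M G H l k) (\<lambda>\<omega>. G k \<omega> - F (x k \<omega>))"
    and noise1m: "\<forall>k. cond_second_moment_le M (hist_F M G H l k) (\<lambda>\<omega>. G k \<omega> - F (x k \<omega>)) (x k) \<nu>1 \<nu>2"
    and noise2: "\<forall>k. cond_mean_zero M (hist_Fh M G H l k) (\<lambda>\<omega>. H k \<omega> - F (xh k \<omega>))"
    and noise2m: "\<forall>k. cond_second_moment_le M (hist_Fh M G H l k) (\<lambda>\<omega>. H k \<omega> - F (xh k \<omega>)) (xh k) \<nu>1 \<nu>2"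
    \<comment> \<open>(A5)\<close>
    and \<eta>_pos: "\<eta> > 0"
    and linreg: "\<forall>z. (norm (z - closest_point X z))\<^sup>2
                    \<le> \<eta> * Max ((\<lambda>i. (norm (z - closest_point (Xs i) z))\<^sup>2) ` {..<m})"
    \<comment> \<open>(A6)\<close>
    and \<rho>_range: "\<forall>i<m. 0 < \<rho> i \<and> \<rho> i \<le> 1"
    and sampling: "\<forall>i<m. \<forall>k. AE \<omega> in M.
                     real_cond_exp M (hist_F M G H l k) (indicator {\<omega>\<in>space M. l k \<omega> = i}) \<omega> \<ge> \<rho> i / m"
    \<comment> \<open>the r-SSE iteration\<close>
    and \<gamma>_pos: "\<forall>k. \<gamma> k > 0"
    and x_init: "\<forall>\<omega>\<in>space M. x 0 \<omega> = x0"
    and step_half: "\<forall>k. \<forall>\<omega>\<in>space M.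
                      xh k \<omega> = closest_point (Xs (l k \<omega>)) (x k \<omega> - \<gamma> k *\<^sub>R G k \<omega>)"
    and step_full: "\<forall>k. \<forall>\<omega>\<in>space M.
                      x (Suc k) \<omega> = closest_point
                        {y. (x k \<omega> - \<gamma> k *\<^sub>R G k \<omega> - xh k \<omega>) \<bullet> (y - xh k \<omega>) \<le> 0}
                        (x k \<omega> - \<gamma> k *\<^sub>R H k \<omega>)"
  shows
    "let \<rho>min = Min (\<rho> ` {..<m});
         \<beta> = 1 - \<rho>min\<^sup>2 / (64 * (real m)\<^sup>2 * \<eta>\<^sup>2)
     in
     ((\<not> summable \<gamma> \<and> summable (\<lambda>k. (\<gamma> k)\<^sup>2)) \<longrightarrow>
        (AE \<omega> in M. (\<lambda>k. infdist (x k \<omega>) X) \<longlonglongrightarrow> 0))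
   \<and> (\<forall>t::real. t \<ge> 1 \<longrightarrow> (\<forall>k\<ge>1. \<gamma> k = 1 / real k powr (t / 2)) \<longrightarrow>
        (\<exists>c. \<forall>k\<ge>kbar \<beta> t.
            integrable M (\<lambda>\<omega>. infdist (x k \<omega>) X) \<and>
            prob_space.expectation M (\<lambda>\<omega>. infdist (x k \<omega>) X) \<le> c / real k powr (t / 2)))
   \<and> ((\<forall>k\<ge>1. \<gamma> k = 1 / sqrt (real k)) \<longrightarrow>
        (\<exists>c. \<forall>K::nat\<ge>1.
            (let kb = kbar \<beta> 1;
                 xbar = (\<lambda>\<omega>. (1 / (\<Sum>k=kb + K div 2..kb + K. \<gamma> k)) *\<^sub>R
                               (\<Sum>k=kb + K div 2..kb + K. \<gamma> k *\<^sub>R x k \<omega>))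
             in integrable M (\<lambda>\<omega>. infdist (xbar \<omega>) X) \<and>
                prob_space.expectation M (\<lambda>\<omega>. infdist (xbar \<omega>) X) \<le> c / sqrt (real K))))"
  proof -
  interpret R: rsse M m Xs X D L \<nu>1 \<nu>2 \<eta> \<rho> F x xh G H l \<gamma> x0
    by (rule rsse.intro[OF prob m_pos X_def Xs_closed Xs_convex X_ne D_pos diam Lip G_meas H_meas
          l_meas l_range \<nu>_nonneg noise1m noise2m \<eta>_pos linreg \<rho>_range sampling \<gamma>_pos x_init
          step_half step_full])
  have rm: "Min (\<rho> ` {..<m}) = R.rmin" unfolding R.rmin_def ..
  have A: "(\<not> summable \<gamma> \<and> summable (\<lambda>k. (\<gamma> k)\<^sup>2)) \<longrightarrow>
        (AE \<omega> in M. (\<lambda>k. infdist (x k \<omega>) X) \<longlonglongrightarrow> 0)"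
  proof (intro impI)
    assume h: "\<not> summable \<gamma> \<and> summable (\<lambda>k. (\<gamma> k)\<^sup>2)"
    show "AE \<omega> in M. (\<lambda>k. infdist (x k \<omega>) X) \<longlonglongrightarrow> 0"
      using conjunct2[OF h] by (rule R.part_a)
  qed
  have B: "\<forall>t::real. t \<ge> 1 \<longrightarrow> (\<forall>k\<ge>1. \<gamma> k = 1 / real k powr (t / 2)) \<longrightarrow>
        (\<exists>c. \<forall>k\<ge>kbar (1 - R.rmin\<^sup>2 / (64 * (real m)\<^sup>2 * \<eta>\<^sup>2)) t.
            integrable M (\<lambda>\<omega>. infdist (x k \<omega>) X) \<and>
            prob_space.expectation M (\<lambda>\<omega>. infdist (x k \<omega>) X) \<le> c / real k powr (t / 2))"
  proof (intro allI impI)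
    fix t :: real assume t: "t \<ge> 1" and g: "\<forall>k\<ge>1. \<gamma> k = 1 / real k powr (t / 2)"
    have t0: "t > 0" using t by simp
    obtain c where c: "\<forall>k\<ge>1. integrable M (\<lambda>\<omega>. infdist (x k \<omega>) X) \<and>
            (\<integral>\<omega>. infdist (x k \<omega>) X \<partial>M) \<le> c / real k powr (t / 2)"
      using R.part_b_gen[OF t0 g] by blast
    have kb: "kbar (1 - R.rmin\<^sup>2 / (64 * (real m)\<^sup>2 * \<eta>\<^sup>2)) t \<ge> 1"
      by (rule R.kbar_ge1[OF t0])
    show "\<exists>c. \<forall>k\<ge>kbar (1 - R.rmin\<^sup>2 / (64 * (real m)\<^sup>2 * \<eta>\<^sup>2)) t.
            integrable M (\<lambda>\<omega>. infdist (x k \<omega>) X) \<and>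
            prob_space.expectation M (\<lambda>\<omega>. infdist (x k \<omega>) X) \<le> c / real k powr (t / 2)"
    proof (intro exI[of _ c] allI impI)
      fix k assume k: "k \<ge> kbar (1 - R.rmin\<^sup>2 / (64 * (real m)\<^sup>2 * \<eta>\<^sup>2)) t"
      have k1: "k \<ge> 1" using k kb by linarith
      show "integrable M (\<lambda>\<omega>. infdist (x k \<omega>) X) \<and>
            prob_space.expectation M (\<lambda>\<omega>. infdist (x k \<omega>) X) \<le> c / real k powr (t / 2)"
        by (rule c[rule_format, OF k1])
    qed
  qed
  have C: "(\<forall>k\<ge>1. \<gamma> k = 1 / sqrt (real k)) \<longrightarrow>
        (\<exists>c. \<forall>K::nat\<ge>1.
            integrable M (\<lambda>\<omega>. infdist ((1 / (\<Sum>k=kbar (1 - R.rmin\<^sup>2 / (64 * (real m)\<^sup>2 * \<eta>\<^sup>2)) 1 + K div 2..kbar (1 - R.rmin\<^sup>2 / (64 * (real m)\<^sup>2 * \<eta>\<^sup>2)) 1 + K. \<gamma> k)) *\<^sub>R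
                               (\<Sum>k=kbar (1 - R.rmin\<^sup>2 / (64 * (real m)\<^sup>2 * \<eta>\<^sup>2)) 1 + K div 2..kbar (1 - R.rmin\<^sup>2 / (64 * (real m)\<^sup>2 * \<eta>\<^sup>2)) 1 + K. \<gamma> k *\<^sub>R x k \<omega>)) X) \<and>
            prob_space.expectation M (\<lambda>\<omega>. infdist ((1 / (\<Sum>k=kbar (1 - R.rmin\<^sup>2 / (64 * (real m)\<^sup>2 * \<eta>\<^sup>2)) 1 + K div 2..kbar (1 - R.rmin\<^sup>2 / (64 * (real m)\<^sup>2 * \<eta>\<^sup>2)) 1 + K. \<gamma> k)) *\<^sub>R
                               (\<Sum>k=kbar (1 - R.rmin\<^sup>2 / (64 * (real m)\<^sup>2 * \<eta>\<^sup>2)) 1 + K div 2..kbar (1 - R.rmin\<^sup>2 / (64 * (real m)\<^sup>2 * \<eta>\<^sup>2)) 1 + K. \<gamma> k *\<^sub>R x k \<omega>)) X) \<le> c / sqrt (real K))"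
  proof (intro impI)
    assume g: "\<forall>k\<ge>1. \<gamma> k = 1 / sqrt (real k)"
    have g': "\<forall>k\<ge>1. \<gamma> k = 1 / real k powr (1 / 2)" using g by (simp add: powr_half_sqrt)
    obtain c where c0: "c \<ge> 0" and c: "\<forall>k\<ge>1. integrable M (\<lambda>\<omega>. infdist (x k \<omega>) X) \<and>
            (\<integral>\<omega>. infdist (x k \<omega>) X \<partial>M) \<le> c / real k powr (1 / 2)"
      using R.part_b_gen[of 1] g' by auto
    have c': "\<forall>k\<ge>1. integrable M (\<lambda>\<omega>. infdist (x k \<omega>) X) \<and>
            (\<integral>\<omega>. infdist (x k \<omega>) X \<partial>M) \<le> c / sqrt (real k)"
      using c by (simp add: powr_half_sqrt)
    have kb: "kbar (1 - R.rmin\<^sup>2 / (64 * (real m)\<^sup>2 * \<eta>\<^sup>2)) 1 \<ge> 1"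
      by (rule R.kbar_ge1) simp
    show "\<exists>c. \<forall>K::nat\<ge>1.
            integrable M (\<lambda>\<omega>. infdist ((1 / (\<Sum>k=kbar (1 - R.rmin\<^sup>2 / (64 * (real m)\<^sup>2 * \<eta>\<^sup>2)) 1 + K div 2..kbar (1 - R.rmin\<^sup>2 / (64 * (real m)\<^sup>2 * \<eta>\<^sup>2)) 1 + K. \<gamma> k)) *\<^sub>R
                               (\<Sum>k=kbar (1 - R.rmin\<^sup>2 / (64 * (real m)\<^sup>2 * \<eta>\<^sup>2)) 1 + K div 2..kbar (1 - R.rmin\<^sup>2 / (64 * (real m)\<^sup>2 * \<eta>\<^sup>2)) 1 + K. \<gamma> k *\<^sub>R x k \<omega>)) X) \<and>
            prob_space.expectation M (\<lambda>\<omega>. infdist ((1 / (\<Sum>k=kbar (1 - R.rmin\<^sup>2 / (64 * (real m)\<^sup>2 * \<eta>\<^sup>2)) 1 + K div 2..kbar (1 - R.rmin\<^sup>2 / (64 * (real m)\<^sup>2 * \<eta>\<^sup>2)) 1 + K. \<gamma> k)) *\<^sub>R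
                               (\<Sum>k=kbar (1 - R.rmin\<^sup>2 / (64 * (real m)\<^sup>2 * \<eta>\<^sup>2)) 1 + K div 2..kbar (1 - R.rmin\<^sup>2 / (64 * (real m)\<^sup>2 * \<eta>\<^sup>2)) 1 + K. \<gamma> k *\<^sub>R x k \<omega>)) X) \<le> c / sqrt (real K)"
    proof (intro exI[of _ "c * sqrt 2"] allI impI)
      fix K :: nat assume K: "K \<ge> 1"
      show "integrable M (\<lambda>\<omega>. infdist ((1 / (\<Sum>k=kbar (1 - R.rmin\<^sup>2 / (64 * (real m)\<^sup>2 * \<eta>\<^sup>2)) 1 + K div 2..kbar (1 - R.rmin\<^sup>2 / (64 * (real m)\<^sup>2 * \<eta>\<^sup>2)) 1 + K. \<gamma> k)) *\<^sub>R
                               (\<Sum>k=kbar (1 - R.rmin\<^sup>2 / (64 * (real m)\<^sup>2 * \<eta>\<^sup>2)) 1 + K div 2..kbar (1 - R.rmin\<^sup>2 / (64 * (real m)\<^sup>2 * \<eta>\<^sup>2)) 1 + K. \<gamma> k *\<^sub>R x k \<omega>)) X) \<and>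
            prob_space.expectation M (\<lambda>\<omega>. infdist ((1 / (\<Sum>k=kbar (1 - R.rmin\<^sup>2 / (64 * (real m)\<^sup>2 * \<eta>\<^sup>2)) 1 + K div 2..kbar (1 - R.rmin\<^sup>2 / (64 * (real m)\<^sup>2 * \<eta>\<^sup>2)) 1 + K. \<gamma> k)) *\<^sub>R
                               (\<Sum>k=kbar (1 - R.rmin\<^sup>2 / (64 * (real m)\<^sup>2 * \<eta>\<^sup>2)) 1 + K div 2..kbar (1 - R.rmin\<^sup>2 / (64 * (real m)\<^sup>2 * \<eta>\<^sup>2)) 1 + K. \<gamma> k *\<^sub>R x k \<omega>)) X) \<le> (c * sqrt 2) / sqrt (real K)"
        by (rule R.part_c_gen[OF c' c0 kb K])
    qed
  qed
  show ?thesis unfolding rm Let_def using A B C by (intro conjI) assumption+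
qed

end
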